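(* Let $1<p\le\frac N2$ and $C_{N,p}=\frac{N(p-1)(N-2p)}{p^2}$. Then for every complex-valued $u\in C_0^\infty(\mathbb{R}^N\setminus\{0\})$, $$\begin{aligned}\int_{\mathbb{R}^N}|\Delta u|^p dx&=C_{N,p}^p\int_{\mathbb{R}^N}\frac{|u|^p}{|x|^{2p}}dx+\int_{\mathbb{R}^N}C_p\left(\Delta u,\;\Delta u+\frac{C_{N,p}}{|x|^2}u\right)dx\\&\quad+p(p-1)C_{N,p}^{p-1}\int_{\mathbb{R}^N}\frac{|u|^{p-2}}{|x|^{2(p-1)}}\left|\nabla|u|+\frac{N-2p}{p}|u|\frac{x}{|x|^2}\right|^2dx\\&\quad+pC_{N,p}^{p-1}\int_{\mathbb{R}^N}\frac{|u|^{p-2}}{|x|^{2(p-1)}}\left(|\nabla u|^2-|\nabla|u||^2\right)dx.\end{aligned}$$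
   Context: $\Delta$ is the Euclidean Laplacian, $\nabla$ the Euclidean gradient, $|\cdot|$ the Euclidean norm (for complex vectors $|\nabla u|^2=\sum_j|\partial_ju|^2$). For $1<p<\infty$ and $\xi,\eta\in\mathbb{C}$, $C_p(\xi,\eta):=|\xi|^p-|\xi-\eta|^p-p|\xi-\eta|^{p-2}\mathrm{Re}\big((\xi-\eta)\overline{\eta}\big)\ (\ge0)$. *)

theory Defs
  imports "HOL-Analysis.Analysis"
begin

definition partial :: "'a::euclidean_space \<Rightarrow> ('a \<Rightarrow> 'b::real_normed_vector) \<Rightarrow> 'a \<Rightarrow> 'b" where
  "partial i f x = vector_derivative (\<lambda>t. f (x + t *\<^sub>R i)) (at 0)"

fun iter_partial :: "'a::euclidean_space list \<Rightarrow> ('a \<Rightarrow> 'b::real_normed_vector) \<Rightarrow> 'a \<Rightarrow> 'b" where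
  "iter_partial [] f = f"
| "iter_partial (i # is) f = partial i (iter_partial is f)"

definition smooth_fun :: "('a::euclidean_space \<Rightarrow> 'b::real_normed_vector) \<Rightarrow> bool" where
  "smooth_fun f \<longleftrightarrow>
     (\<forall>is. set is \<subseteq> Basis \<longrightarrow>
        continuous_on UNIV (iter_partial is f) \<and>
        (\<forall>i\<in>Basis. \<forall>x. (\<lambda>t. iter_partial is f (x + t *\<^sub>R i)) differentiable (at 0)))"

definition C0inf_punctured :: "('a::euclidean_space \<Rightarrow> 'b::real_normed_vector) \<Rightarrow> bool" where
  "C0inf_punctured u \<longleftrightarrow> smooth_fun u \<and> compact (closure {x. u x \<noteq> 0})
      \<and> 0 \<notin> closure {x. u x \<noteq> 0}"

definition laplacian :: "('a::euclidean_space \<Rightarrow> 'b::real_normed_vector) \<Rightarrow> 'a \<Rightarrow> 'b" where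
  "laplacian u x = (\<Sum>i\<in>Basis. partial i (partial i u) x)"

definition grad :: "('a::euclidean_space \<Rightarrow> real) \<Rightarrow> 'a \<Rightarrow> 'a" where
  "grad f x = (\<Sum>i\<in>Basis. partial i f x *\<^sub>R i)"

definition grad_norm_sq :: "('a::euclidean_space \<Rightarrow> complex) \<Rightarrow> 'a \<Rightarrow> real" where
  "grad_norm_sq u x = (\<Sum>i\<in>Basis. (cmod (partial i u x))\<^sup>2)"

definition Cp :: "real \<Rightarrow> complex \<Rightarrow> complex \<Rightarrow> real" where
  "Cp p \<xi> \<eta> = cmod \<xi> powr p - cmod (\<xi> - \<eta>) powr p
     - p * cmod (\<xi> - \<eta>) powr (p - 2) * Re ((\<xi> - \<eta>) * cnj \<eta>)"

end

theory Submission
  imports Defs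
begin


lemma iter_partial_snoc: "iter_partial (is @ [i]) f = iter_partial is (partial i f)"
  by (induction "is") auto

lemma smooth_partial:
  assumes "smooth_fun f" "i \<in> Basis"
  shows "smooth_fun (partial i f)"
  unfolding smooth_fun_def
proof (intro allI impI)
  fix "is" :: "'a list" assume "set is \<subseteq> Basis"
  then have "set (is @ [i]) \<subseteq> Basis" using assms(2) by auto
  show "continuous_on UNIV (iter_partial is (partial i f)) \<and>
        (\<forall>j\<in>Basis. \<forall>x. (\<lambda>t. iter_partial is (partial i f) (x + t *\<^sub>R j)) differentiable at 0)"
    using assms(1)[unfolded smooth_fun_def, rule_format, OF \<open>set (is @ [i]) \<subseteq> Basis\<close>]
    unfolding iter_partial_snoc .
qed

lemma smooth_base:
  assumes "smooth_fun f"
  shows "continuous_on UNIV f \<and> (\<forall>i\<in>Basis. \<forall>x. (\<lambda>t. f (x + t *\<^sub>R i)) differentiable (at 0))"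
proof -
  have "set ([]::'a list) \<subseteq> Basis" by simp
  from assms[unfolded smooth_fun_def, rule_format, OF this] show ?thesis by simp
qed

lemma smooth_cont: "smooth_fun f \<Longrightarrow> continuous_on UNIV f"
  using smooth_base by blast

lemma smooth_line_deriv:
  assumes "smooth_fun f" "i \<in> Basis"
  shows "((\<lambda>t. f (x + t *\<^sub>R i)) has_vector_derivative partial i f x) (at 0)"
proof -
  have "(\<lambda>t. f (x + t *\<^sub>R i)) differentiable (at 0)"
    using assms smooth_base by blast
  then show ?thesis unfolding partial_def using vector_derivative_works by blast
qed

lemma line_deriv_zero:
  fixes H :: "'a::euclidean_space \<Rightarrow> 'b::real_normed_vector"
  assumes "open V" "x \<in> V" "\<And>y. y \<in> V \<Longrightarrow> H y = 0"
  shows "((\<lambda>t. H (x + t *\<^sub>R i)) has_vector_derivative 0) (at 0)"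
proof -
  have "open ((\<lambda>t. x + t *\<^sub>R i) -` V)"
    by (intro open_vimage assms continuous_intros)
  moreover have "0 \<in> (\<lambda>t. x + t *\<^sub>R i) -` V" using assms by simp
  moreover have "((\<lambda>t. 0::'b) has_vector_derivative 0) (at 0)" by (rule has_vector_derivative_const)
  moreover have "\<And>t. t \<in> (\<lambda>t. x + t *\<^sub>R i) -` V \<Longrightarrow> 0 = H (x + t *\<^sub>R i)"
    using assms(3) by simp
  ultimately show ?thesis
    using has_vector_derivative_transform_within_open[of "\<lambda>t. 0" 0 0 "(\<lambda>t. x + t *\<^sub>R i) -` V" "\<lambda>t. H (x + t *\<^sub>R i)"]
    by blast
qed

lemma partial_zero:
  fixes H :: "'a::euclidean_space \<Rightarrow> 'b::real_normed_vector"
  assumes "open V" "x \<in> V" "\<And>y. y \<in> V \<Longrightarrow> H y = 0"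
  shows "partial i H x = 0"
  unfolding partial_def using line_deriv_zero[OF assms] by (rule vector_derivative_at)


lemma supp_eq_ind:
  fixes F :: "'a::euclidean_space \<Rightarrow> real"
  assumes "\<And>y. y \<notin> S \<Longrightarrow> F y = 0"
  shows "F = (\<lambda>x. indicator S x *\<^sub>R F x)"
proof (rule ext)
  fix x show "F x = indicator S x *\<^sub>R F x"
    by (cases "x \<in> S") (simp_all add: assms)
qed

lemma meas_supp:
  fixes F :: "'a::euclidean_space \<Rightarrow> real"
  assumes "closed S" "continuous_on S F" "\<And>y. y \<notin> S \<Longrightarrow> F y = 0"
  shows "F \<in> borel_measurable borel"
proof -
  have "(\<lambda>x. indicator S x *\<^sub>R F x) \<in> borel_measurable borel"
    using assms(1,2) by (intro borel_measurable_continuous_on_indicator) auto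
  moreover have eq: "F = (\<lambda>x. indicator S x *\<^sub>R F x)" by (rule supp_eq_ind) (rule assms(3))
  ultimately show ?thesis by (metis (no_types))
qed

lemma int_supp:
  fixes F :: "'a::euclidean_space \<Rightarrow> real"
  assumes "compact S" "continuous_on S F" "\<And>y. y \<notin> S \<Longrightarrow> F y = 0"
  shows "integrable lborel F"
proof -
  have "integrable lborel (\<lambda>x. indicator S x *\<^sub>R F x)"
    using assms(1,2) by (rule borel_integrable_compact)
  moreover have eq: "F = (\<lambda>x. indicator S x *\<^sub>R F x)" by (rule supp_eq_ind) (rule assms(3))
  ultimately show ?thesis by (metis (no_types))
qed

lemma bound_supp:
  fixes F :: "'a::euclidean_space \<Rightarrow> real"
  assumes "compact S" "continuous_on S F" "\<And>y. y \<notin> S \<Longrightarrow> F y = 0"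
  obtains M where "M > 0" "\<And>y. \<bar>F y\<bar> \<le> M"
proof -
  have "bounded (F ` S)" using assms(1,2) by (intro compact_imp_bounded compact_continuous_image)
  then obtain M where M: "M > 0" "\<And>z. z \<in> F ` S \<Longrightarrow> norm z \<le> M" unfolding bounded_pos by blast
  have "\<bar>F y\<bar> \<le> M" for y
  proof (cases "y \<in> S")
    case True then show ?thesis using M(2)[of "F y"] by simp
  next
    case False then show ?thesis using assms(3)[of y] M(1) by simp
  qed
  then show ?thesis using M(1) that by blast
qed

lemma integral_translate:
  fixes H :: "'a::euclidean_space \<Rightarrow> real"
  assumes "H \<in> borel_measurable borel" "integrable lborel H"
  shows "integrable lborel (\<lambda>x. H (x + c))" "integral\<^sup>L lborel (\<lambda>x. H (x + c)) = integral\<^sup>L lborel H"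
proof -
  have m: "((+) c) \<in> measurable lborel borel" by measurable
  have "integrable (distr lborel borel ((+) c)) H" using assms(2) by (simp add: lborel_distr_plus)
  then have "integrable lborel (\<lambda>x. H (c + x))" using integrable_distr_eq[OF m assms(1)] by simp
  then show "integrable lborel (\<lambda>x. H (x + c))" by (simp add: add.commute)
  have "integral\<^sup>L (distr lborel borel ((+) c)) H = integral\<^sup>L lborel (\<lambda>x. H (c + x))"
    using integral_distr[OF m assms(1)] .
  then show "integral\<^sup>L lborel (\<lambda>x. H (x + c)) = integral\<^sup>L lborel H"
    by (simp add: lborel_distr_plus add.commute)
qed

lemma ibp_line:
  fixes H D :: "'a::euclidean_space \<Rightarrow> real" and e :: 'a
  assumes S: "compact S"
   and Hc: "continuous_on S H" and H0: "\<And>y. y \<notin> S \<Longrightarrow> H y = 0"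
   and Dc: "continuous_on S D" and D0: "\<And>y. y \<notin> S \<Longrightarrow> D y = 0"
   and der: "\<And>y. ((\<lambda>t. H (y + t *\<^sub>R e)) has_real_derivative D y) (at 0)"
  shows "integrable lborel D" "integral\<^sup>L lborel D = 0"
proof -
  have clS: "closed S" using S by (rule compact_imp_closed)
  have Hm: "H \<in> borel_measurable borel" by (rule meas_supp[OF clS Hc H0])
  have Dm: "D \<in> borel_measurable borel" by (rule meas_supp[OF clS Dc D0])
  have Hi: "integrable lborel H" by (rule int_supp[OF S Hc H0])
  show "integrable lborel D" by (rule int_supp[OF S Dc D0])
  obtain M where M: "M > 0" "\<And>y. \<bar>D y\<bar> \<le> M" using bound_supp[OF S Dc D0] by blast
  define t :: "nat \<Rightarrow> real" where "t n = inverse (real (Suc n))" for n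
  have tpos: "t n > 0" for n unfolding t_def by simp
  have tle: "t n \<le> 1" for n unfolding t_def by (simp add: field_simps)
  define q where "q n x = (H (x + t n *\<^sub>R e) - H x) / t n" for n x
  define S' where "S' = (\<lambda>z. fst z - snd z *\<^sub>R e) ` (S \<times> {0..1::real})"
  have S'c: "compact S'" unfolding S'_def
    by (intro compact_continuous_image compact_Times S compact_Icc continuous_intros)
  have qm: "q n \<in> borel_measurable borel" for n
    unfolding q_def using Hm by measurable
  have Hti: "integrable lborel (\<lambda>x. H (x + c))" "integral\<^sup>L lborel (\<lambda>x. H (x + c)) = integral\<^sup>L lborel H" for c
    using integral_translate[OF Hm Hi] by auto
  have qint: "integral\<^sup>L lborel (q n) = 0" for n
  proof -
    have "integral\<^sup>L lborel (q n) = integral\<^sup>L lborel (\<lambda>x. H (x + t n *\<^sub>R e) - H x) / t n"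
      unfolding q_def by (rule integral_divide_zero)
    also have "integral\<^sup>L lborel (\<lambda>x. H (x + t n *\<^sub>R e) - H x) = 0"
      using Hti[of "t n *\<^sub>R e"] Hi by (simp add: integral_diff)
    finally show ?thesis by simp
  qed
  have tlim: "filterlim t (at 0) sequentially"
  proof -
    have "t \<longlonglongrightarrow> 0" unfolding t_def by (rule LIMSEQ_inverse_real_of_nat)
    moreover have "eventually (\<lambda>n. t n \<in> UNIV - {0}) sequentially" using tpos
      by (simp add: less_imp_neq[symmetric])
    ultimately show ?thesis by (simp add: filterlim_at)
  qed
  have qlim: "(\<lambda>n. q n x) \<longlonglongrightarrow> D x" for x
  proof -
    have "((\<lambda>h. (H (x + (0 + h) *\<^sub>R e) - H (x + 0 *\<^sub>R e)) / h) \<longlongrightarrow> D x) (at 0)"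
      using der[of x] unfolding DERIV_def .
    then have "((\<lambda>h. (H (x + h *\<^sub>R e) - H x) / h) \<longlongrightarrow> D x) (at 0)" by simp
    from filterlim_compose[OF this tlim] show ?thesis unfolding q_def by (simp add: o_def)
  qed
  have qbound: "\<bar>q n x\<bar> \<le> M * indicator S' x" for n x
  proof (cases "x \<in> S'")
    case False
    have "x \<notin> S"
    proof
      assume "x \<in> S"
      then have "(x, 0) \<in> S \<times> {0..1::real}" by simp
      then have "fst (x,0::real) - snd (x,0::real) *\<^sub>R e \<in> S'" unfolding S'_def by (rule imageI)
      then show False using False by simp
    qed
    moreover have "x + t n *\<^sub>R e \<notin> S"
    proof
      assume "x + t n *\<^sub>R e \<in> S"
      then have "(x + t n *\<^sub>R e, t n) \<in> S \<times> {0..1::real}" using tpos[of n] tle[of n] by simp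
      then have "fst (x + t n *\<^sub>R e, t n) - snd (x + t n *\<^sub>R e, t n) *\<^sub>R e \<in> S'"
        unfolding S'_def by (rule imageI)
      then show False using False by simp
    qed
    ultimately show ?thesis using False by (simp add: q_def H0)
  next
    case True
    define f where "f \<tau> = H (x + \<tau> *\<^sub>R e)" for \<tau>
    have fd: "DERIV f z :> D (x + z *\<^sub>R e)" for z
    proof -
      have "((\<lambda>\<tau>. H ((x + z *\<^sub>R e) + \<tau> *\<^sub>R e)) has_real_derivative D (x + z *\<^sub>R e)) (at 0)"
        by (rule der)
      moreover have "(\<lambda>\<tau>. H ((x + z *\<^sub>R e) + \<tau> *\<^sub>R e)) = (\<lambda>\<tau>. f (\<tau> + z))"
        unfolding f_def by (simp add: scaleR_add_left add_ac)
      ultimately have "((\<lambda>\<tau>. f (\<tau> + z)) has_real_derivative D (x + z *\<^sub>R e)) (at 0)" by simp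
      then show ?thesis using DERIV_shift[of f "D (x + z *\<^sub>R e)" 0 z] by simp
    qed
    obtain z where "0 < z" "z < t n" "f (t n) - f 0 = (t n - 0) * D (x + z *\<^sub>R e)"
      using MVT2[OF tpos[of n], of f "\<lambda>z. D (x + z *\<^sub>R e)"] fd by blast
    then have "q n x = D (x + z *\<^sub>R e)" unfolding q_def f_def using tpos[of n] by simp
    then show ?thesis using M(2)[of "x + z *\<^sub>R e"] True by simp
  qed
  have wint: "integrable lborel (\<lambda>x. M * indicator S' x)"
  proof (intro integrable_mult_right)
    show "integrable lborel (indicator S' :: 'a \<Rightarrow> real)"
      unfolding integrable_indicator_iff using S'c emeasure_compact_finite[OF S'c]
      by (simp add: compact_imp_closed borel_closed)
  qed
  have "(\<lambda>n. integral\<^sup>L lborel (q n)) \<longlonglongrightarrow> integral\<^sup>L lborel D"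
    by (rule integral_dominated_convergence[OF Dm[unfolded measurable_lborel2[symmetric]] qm[unfolded measurable_lborel2[symmetric]] wint])
      (simp_all add: qlim qbound)
  then show "integral\<^sup>L lborel D = 0" using qint by (simp add: LIMSEQ_const_iff)
qed


locale cset =
  fixes u :: "'a::euclidean_space \<Rightarrow> complex" and p c :: real
  assumes sm: "smooth_fun u" and p1: "1 < p"
    and cpt: "compact (closure {x. u x \<noteq> 0})" and z0: "0 \<notin> closure {x. u x \<noteq> 0}"
begin

definition "S = closure {x. u x \<noteq> 0}"
definition "sq y = Re (cnj (u y) * u y)"
definition "R e y = Re (cnj (u y) * partial e u y)"
definition "chi \<epsilon> s = s * (s + \<epsilon>) powr ((p-4)/2)"
definition "chid \<epsilon> s = (s + \<epsilon>) powr ((p-4)/2) + s * ((p-4)/2 * (s+\<epsilon>) powr ((p-4)/2 - 1))"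
definition "psi \<epsilon> s = (s+\<epsilon>) powr (p/2) - \<epsilon> powr (p/2)"
definition "psid \<epsilon> s = (p/2) * (s+\<epsilon>) powr (p/2 - 1)"
definition "F \<epsilon> e y = (norm y ^2) powr (1-p) * chi \<epsilon> (sq y) * R e y
   + c * ((norm y^2) powr (-p) * (y \<bullet> e) * psi \<epsilon> (sq y))"
definition "DF \<epsilon> e y = ((1-p) * (norm y^2) powr (-p) * (2*(y \<bullet> e))) * chi \<epsilon> (sq y) * R e y
   + (norm y^2) powr (1-p) * (chid \<epsilon> (sq y) * (2 * R e y)) * R e y
   + (norm y^2) powr (1-p) * chi \<epsilon> (sq y) * (Re (cnj (u y) * partial e (partial e u) y) + (cmod (partial e u y))^2)
   + c * (((-p) * (norm y^2) powr (-p-1) * (2*(y \<bullet> e))) * (y \<bullet> e) * psi \<epsilon> (sq y)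
      + (norm y^2) powr (-p) * psi \<epsilon> (sq y) + (norm y^2) powr (-p) * (y \<bullet> e) * (psid \<epsilon> (sq y) * (2 * R e y)))"

lemma S_compact: "compact S" using cpt unfolding S_def .
lemma S_closed: "closed S" unfolding S_def by (rule closed_closure)
lemma S_nz: assumes "y \<in> S" shows "y \<noteq> 0"
proof
  assume "y = 0" then show False using z0 assms unfolding S_def by simp
qed
lemma out_S_open: "open (- S)" using S_closed by (simp add: open_Compl)
lemma u_out: assumes "y \<notin> S" shows "u y = 0"
proof (rule ccontr)
  assume "u y \<noteq> 0"
  then have "y \<in> {x. u x \<noteq> 0}" by simp
  then have "y \<in> S" unfolding S_def using closure_subset by (rule subsetD[rotated])
  then show False using assms by simp
qed

lemma sq_eq: "sq y = (cmod (u y))^2"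
  unfolding sq_def cmod_power2 by (simp add: power2_eq_square)

lemma sq_nonneg: "sq y \<ge> 0" unfolding sq_eq by simp

lemma ud_out: assumes "y \<notin> S" shows "partial e u y = 0"
proof (rule partial_zero[of "- S"])
  show "open (- S)" by (rule out_S_open)
  show "y \<in> - S" using assms by simp
  fix z assume "z \<in> - S" then show "u z = 0" using u_out by simp
qed

lemma udd_out: assumes "y \<notin> S" shows "partial e (partial e u) y = 0"
proof (rule partial_zero[of "- S"])
  show "open (- S)" by (rule out_S_open)
  show "y \<in> - S" using assms by simp
  fix z assume "z \<in> - S" then show "partial e u z = 0" using ud_out by simp
qed

lemma F_deriv:
  assumes e: "e \<in> Basis" and eps: "\<epsilon> > 0" and yS: "y \<in> S"
  shows "((\<lambda>t. F \<epsilon> e (y + t *\<^sub>R e)) has_real_derivative DF \<epsilon> e y) (at 0)"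
proof -
  define Y where "Y t = y + t *\<^sub>R e" for t
  have Y0: "Y 0 = y" unfolding Y_def by simp
  have hg: "((\<lambda>t. u (Y t)) has_vector_derivative partial e u y) (at 0)"
    unfolding Y_def by (rule smooth_line_deriv[OF sm e])
  have hg1: "((\<lambda>t. partial e u (Y t)) has_vector_derivative partial e (partial e u) y) (at 0)"
    unfolding Y_def by (rule smooth_line_deriv[OF smooth_partial[OF sm e] e])
  have dsq: "((\<lambda>t. sq (Y t)) has_real_derivative 2 * R e y) (at 0)"
  proof -
    have "((\<lambda>t. Re (cnj (u (Y t)) * u (Y t))) has_real_derivative
       Re (cnj (u (Y 0)) * partial e u y + cnj (partial e u y) * u (Y 0))) (at 0)"
      by (rule has_field_derivative_Re[OF has_vector_derivative_mult[OF has_vector_derivative_cnj[OF hg] hg]])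
    then show ?thesis unfolding sq_def R_def Y0
      by (rule DERIV_cong) (simp add: algebra_simps)
  qed
  have dR: "((\<lambda>t. R e (Y t)) has_real_derivative
      Re (cnj (u y) * partial e (partial e u) y) + (cmod (partial e u y))^2) (at 0)"
  proof -
    have "((\<lambda>t. Re (cnj (u (Y t)) * partial e u (Y t))) has_real_derivative
       Re (cnj (u (Y 0)) * partial e (partial e u) y + cnj (partial e u y) * partial e u (Y 0))) (at 0)"
      by (rule has_field_derivative_Re[OF has_vector_derivative_mult[OF has_vector_derivative_cnj[OF hg] hg1]])
    then show ?thesis unfolding R_def Y0
      by (rule DERIV_cong) (unfold cmod_power2, simp add: power2_eq_square)
  qed
  have dn: "((\<lambda>t. norm (Y t)^2) has_real_derivative 2 * (y \<bullet> e)) (at 0)"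
  proof -
    have ee: "e \<bullet> e = 1" using e by simp
    have eq: "(\<lambda>t. norm (Y t)^2) = (\<lambda>t. norm y ^2 + 2 * t * (y \<bullet> e) + t^2)"
      unfolding Y_def power2_norm_eq_inner
      by (rule ext) (simp add: inner_add_left inner_add_right ee inner_commute power2_eq_square algebra_simps)
    have "((\<lambda>t. norm y ^2 + 2 * t * (y \<bullet> e) + t^2) has_real_derivative 0 + 2 * 1 * (y \<bullet> e) + 2 * 0) (at 0)"
      by (intro derivative_eq_intros) auto
    then show ?thesis unfolding eq by simp
  qed
  have dl: "((\<lambda>t. Y t \<bullet> e) has_real_derivative 1) (at 0)"
  proof -
    have ee: "e \<bullet> e = 1" using e by simp
    have eq: "(\<lambda>t. Y t \<bullet> e) = (\<lambda>t. y \<bullet> e + t)" unfolding Y_def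
      by (rule ext) (simp add: inner_add_left ee)
    have "((\<lambda>t. y \<bullet> e + t) has_real_derivative 0 + 1) (at 0)"
      by (intro derivative_eq_intros) auto
    then show ?thesis unfolding eq by simp
  qed
  have npos: "norm (Y 0)^2 > 0" using S_nz[OF yS] Y0 by simp
  have spos: "sq (Y 0) + \<epsilon> > 0" using sq_nonneg[of "Y 0"] eps by simp
  have dsqe: "((\<lambda>t. sq (Y t) + \<epsilon>) has_real_derivative 2 * R e y + 0) (at 0)"
    by (rule DERIV_add[OF dsq DERIV_const])
  have dchi: "((\<lambda>t. chi \<epsilon> (sq (Y t))) has_real_derivative chid \<epsilon> (sq y) * (2 * R e y)) (at 0)"
  proof -
    have "((\<lambda>t. sq (Y t) * (sq (Y t) + \<epsilon>) powr ((p-4)/2)) has_real_derivative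
      sq (Y 0) * ((p-4)/2 * (sq (Y 0) + \<epsilon>) powr ((p-4)/2 - of_nat 1) * (2 * R e y + 0))
      + 2 * R e y * (sq (Y 0) + \<epsilon>) powr ((p-4)/2)) (at 0)"
      by (rule DERIV_mult'[OF dsq DERIV_fun_powr[OF dsqe spos]])
    then show ?thesis unfolding chi_def
      by (rule DERIV_cong) (simp add: Y0 chid_def algebra_simps)
  qed
  have dpsi: "((\<lambda>t. psi \<epsilon> (sq (Y t))) has_real_derivative psid \<epsilon> (sq y) * (2 * R e y)) (at 0)"
  proof -
    have "((\<lambda>t. (sq (Y t) + \<epsilon>) powr (p/2) - \<epsilon> powr (p/2)) has_real_derivative
      (p/2) * (sq (Y 0) + \<epsilon>) powr (p/2 - of_nat 1) * (2 * R e y + 0) - 0) (at 0)"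
      by (rule DERIV_diff[OF DERIV_fun_powr[OF dsqe spos] DERIV_const])
    then show ?thesis unfolding psi_def
      by (rule DERIV_cong) (simp add: Y0 psid_def algebra_simps)
  qed
  have dw: "((\<lambda>t. (norm (Y t)^2) powr (1-p)) has_real_derivative (1-p) * (norm y^2) powr (-p) * (2*(y \<bullet> e))) (at 0)"
    using DERIV_fun_powr[OF dn npos, of "1-p"] by (simp add: Y0)
  have db: "((\<lambda>t. (norm (Y t)^2) powr (-p)) has_real_derivative (-p) * (norm y^2) powr (-p-1) * (2*(y \<bullet> e))) (at 0)"
    using DERIV_fun_powr[OF dn npos, of "-p"] by (simp add: Y0)
  have d1: "((\<lambda>t. (norm (Y t)^2) powr (1-p) * chi \<epsilon> (sq (Y t)) * R e (Y t)) has_real_derivative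
     (norm (Y 0)^2) powr (1-p) * chi \<epsilon> (sq (Y 0)) * (Re (cnj (u y) * partial e (partial e u) y) + (cmod (partial e u y))^2)
     + ((norm (Y 0)^2) powr (1-p) * (chid \<epsilon> (sq y) * (2 * R e y)) + (1-p) * (norm y^2) powr (-p) * (2*(y \<bullet> e)) * chi \<epsilon> (sq (Y 0))) * R e (Y 0)) (at 0)"
    by (rule DERIV_mult'[OF DERIV_mult'[OF dw dchi] dR])
  have d2: "((\<lambda>t. (norm (Y t)^2) powr (-p) * (Y t \<bullet> e) * psi \<epsilon> (sq (Y t))) has_real_derivative
     (norm (Y 0)^2) powr (-p) * (Y 0 \<bullet> e) * (psid \<epsilon> (sq y) * (2 * R e y))
     + ((norm (Y 0)^2) powr (-p) * 1 + (-p) * (norm y^2) powr (-p-1) * (2*(y \<bullet> e)) * (Y 0 \<bullet> e)) * psi \<epsilon> (sq (Y 0))) (at 0)"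
    by (rule DERIV_mult'[OF DERIV_mult'[OF db dl] dpsi])
  show ?thesis unfolding Y_def[symmetric] F_def
    apply (rule DERIV_cong[OF DERIV_add[OF d1 DERIV_cmult[OF d2]]])
    by (simp add: Y0 DF_def algebra_simps)
qed

lemma uc: "continuous_on A u"
  using smooth_cont[OF sm] by (rule continuous_on_subset) simp
lemma udc: assumes "e \<in> Basis" shows "continuous_on A (partial e u)"
  using smooth_cont[OF smooth_partial[OF sm assms]] by (rule continuous_on_subset) simp
lemma uddc: assumes "e \<in> Basis" shows "continuous_on A (partial e (partial e u))"
  using smooth_cont[OF smooth_partial[OF smooth_partial[OF sm assms] assms]] by (rule continuous_on_subset) simp

lemma ne0: "\<forall>x\<in>S. norm x ^ 2 \<noteq> 0" using S_nz by simp
lemma se0: "\<epsilon> > 0 \<Longrightarrow> \<forall>x\<in>A. Re (cnj (u x) * u x) + \<epsilon> \<noteq> 0"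
  using sq_nonneg unfolding sq_def by (metis add_nonneg_pos less_irrefl)

lemma F_cont: assumes "e \<in> Basis" "\<epsilon> > 0" shows "continuous_on S (F \<epsilon> e)"
  unfolding F_def chi_def psi_def sq_def R_def
  by (intro continuous_intros uc udc[OF assms(1)] ne0 se0[OF assms(2)])

lemma DF_cont: assumes "e \<in> Basis" "\<epsilon> > 0" shows "continuous_on S (DF \<epsilon> e)"
  unfolding DF_def chi_def chid_def psi_def psid_def sq_def R_def
  by (intro continuous_intros uc udc[OF assms(1)] uddc[OF assms(1)] ne0 se0[OF assms(2)])

lemma F_out: assumes "y \<notin> S" shows "F \<epsilon> e y = 0" "DF \<epsilon> e y = 0"
  using u_out[OF assms] ud_out[OF assms] udd_out[OF assms]
  by (simp_all add: F_def DF_def chi_def psi_def sq_def R_def)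

lemma F_ibp: assumes "e \<in> Basis" "\<epsilon> > 0"
  shows "integrable lborel (DF \<epsilon> e)" "integral\<^sup>L lborel (DF \<epsilon> e) = 0"
proof -
  have der: "((\<lambda>t. F \<epsilon> e (y + t *\<^sub>R e)) has_real_derivative DF \<epsilon> e y) (at 0)" for y
  proof (cases "y \<in> S")
    case True then show ?thesis using F_deriv assms by blast
  next
    case False
    have "((\<lambda>t. F \<epsilon> e (y + t *\<^sub>R e)) has_vector_derivative 0) (at 0)"
      by (rule line_deriv_zero[OF out_S_open]) (use False F_out in auto)
    then show ?thesis using F_out(2)[OF False]
      by (simp add: has_real_derivative_iff_has_vector_derivative)
  qed
  show "integrable lborel (DF \<epsilon> e)" "integral\<^sup>L lborel (DF \<epsilon> e) = 0"
    using ibp_line[OF S_compact F_cont[OF assms] F_out(1) DF_cont[OF assms] F_out(2) der] by auto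
qed

end


context cset
begin

definition "nR2 y = (\<Sum>e\<in>Basis. (R e y)^2)"
definition "gn y = (\<Sum>e\<in>Basis. (cmod (partial e u y))^2)"
definition "yR y = (\<Sum>e\<in>Basis. (y \<bullet> e) * R e y)"
definition "lapRe y = (\<Sum>e\<in>Basis. Re (cnj (u y) * partial e (partial e u) y))"
definition "NN = real DIM('a)"
definition "P \<epsilon> y = (norm y^2) powr (1-p) * (2 * chid \<epsilon> (sq y) * nR2 y + chi \<epsilon> (sq y) * gn y)"
definition "Q \<epsilon> y = 2*(1-p) * (norm y^2) powr (-p) * chi \<epsilon> (sq y) * yR y
   + (norm y^2) powr (1-p) * chi \<epsilon> (sq y) * lapRe y
   + c * ((NN - 2*p) * (norm y^2) powr (-p) * psi \<epsilon> (sq y) + 2 * (norm y^2) powr (-p) * psid \<epsilon> (sq y) * yR y)"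
definition "Dsum \<epsilon> y = (\<Sum>e\<in>Basis. DF \<epsilon> e y)"

lemma DF_lin:
  fixes \<epsilon> :: real and y :: 'a
  defines "k1 \<equiv> 2*(1-p) * (norm y^2) powr (-p) * chi \<epsilon> (sq y) + c * (2 * (norm y^2) powr (-p) * psid \<epsilon> (sq y))"
    and "k2 \<equiv> 2 * (norm y^2) powr (1-p) * chid \<epsilon> (sq y)"
    and "k3 \<equiv> (norm y^2) powr (1-p) * chi \<epsilon> (sq y)"
    and "k5 \<equiv> c * (-2 * p * (norm y^2) powr (-p-1) * psi \<epsilon> (sq y))"
    and "k6 \<equiv> c * ((norm y^2) powr (-p) * psi \<epsilon> (sq y))"
  shows "DF \<epsilon> e y = k1 * ((y \<bullet> e) * R e y) + k2 * (R e y)^2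
     + k3 * (Re (cnj (u y) * partial e (partial e u) y) + (cmod (partial e u y))^2)
     + k5 * (y \<bullet> e)^2 + k6"
  unfolding DF_def k1_def k2_def k3_def k5_def k6_def
  by (simp add: algebra_simps power2_eq_square)

lemma Dsum_eq: assumes "y \<in> S" shows "Dsum \<epsilon> y = P \<epsilon> y + Q \<epsilon> y"
proof -
  define k1 where "k1 \<equiv> 2*(1-p) * (norm y^2) powr (-p) * chi \<epsilon> (sq y) + c * (2 * (norm y^2) powr (-p) * psid \<epsilon> (sq y))"
  define k2 where "k2 \<equiv> 2 * (norm y^2) powr (1-p) * chid \<epsilon> (sq y)"
  define k3 where "k3 \<equiv> (norm y^2) powr (1-p) * chi \<epsilon> (sq y)"
  define k5 where "k5 \<equiv> c * (-2 * p * (norm y^2) powr (-p-1) * psi \<epsilon> (sq y))"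
  define k6 where "k6 \<equiv> c * ((norm y^2) powr (-p) * psi \<epsilon> (sq y))"
  have "Dsum \<epsilon> y = (\<Sum>e\<in>Basis. k1 * ((y \<bullet> e) * R e y) + k2 * (R e y)^2
     + k3 * (Re (cnj (u y) * partial e (partial e u) y) + (cmod (partial e u y))^2)
     + k5 * (y \<bullet> e)^2 + k6)"
    unfolding Dsum_def k1_def k2_def k3_def k5_def k6_def by (rule sum.cong[OF refl]) (rule DF_lin)
  also have "\<dots> = k1 * yR y + k2 * nR2 y + k3 * (lapRe y + gn y) + k5 * (\<Sum>e\<in>Basis. (y \<bullet> e)^2) + k6 * NN"
    unfolding yR_def nR2_def lapRe_def gn_def NN_def
    by (simp add: sum.distrib sum_distrib_left distrib_left)
  also have "(\<Sum>e\<in>Basis. (y \<bullet> e)^2) = norm y ^2"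
    unfolding power2_norm_eq_inner by (subst euclidean_inner) (simp add: power2_eq_square)
  also have "k5 * norm y ^2 = c * (-2 * p * (norm y^2) powr (-p) * psi \<epsilon> (sq y))"
  proof -
    have pos: "norm y ^2 > 0" using S_nz[OF assms] by simp
    have "(norm y^2) powr (-p) = (norm y^2) powr ((-p-1) + 1)" by simp
    also have "\<dots> = (norm y^2) powr (-p-1) * (norm y^2) powr 1" by (rule powr_add)
    also have "\<dots> = (norm y^2) powr (-p-1) * norm y ^2" using pos by simp
    finally show ?thesis unfolding k5_def by (simp add: algebra_simps)
  qed
  finally show ?thesis unfolding P_def Q_def k1_def k2_def k3_def k6_def
    by (simp add: algebra_simps)
qed

lemma Dsum_out: assumes "y \<notin> S" shows "Dsum \<epsilon> y = 0" "P \<epsilon> y = 0" "Q \<epsilon> y = 0"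
  using u_out[OF assms] ud_out[OF assms] F_out[OF assms]
  by (simp_all add: Dsum_def P_def Q_def nR2_def gn_def yR_def lapRe_def chi_def psi_def sq_def R_def)

lemma Dsum_int: assumes "\<epsilon> > 0" shows "integrable lborel (Dsum \<epsilon>)" "integral\<^sup>L lborel (Dsum \<epsilon>) = 0"
proof -
  show "integrable lborel (Dsum \<epsilon>)" unfolding Dsum_def
    using F_ibp(1)[OF _ assms] by (intro Bochner_Integration.integrable_sum) auto
  have "integral\<^sup>L lborel (Dsum \<epsilon>) = (\<Sum>e\<in>Basis. integral\<^sup>L lborel (DF \<epsilon> e))"
    unfolding Dsum_def by (rule Bochner_Integration.integral_sum) (use F_ibp(1)[OF _ assms] in auto)
  also have "\<dots> = 0" using F_ibp(2)[OF _ assms] by simp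
  finally show "integral\<^sup>L lborel (Dsum \<epsilon>) = 0" .
qed

end


lemma powr_mult_self: "(s::real) > 0 \<Longrightarrow> s * s powr a = s powr (a + 1)"
  by (simp add: powr_add)

context cset
begin

definition "eps n = inverse (real (Suc n))"
definition "P0 y = (if sq y = 0 then 0 else (norm y^2) powr (1-p) *
   ((p-2) * sq y powr ((p-4)/2) * nR2 y + sq y powr ((p-2)/2) * gn y))"
definition "Q0 y = (if sq y = 0 then 0 else
   2*(1-p) * (norm y^2) powr (-p) * sq y powr ((p-2)/2) * yR y
   + (norm y^2) powr (1-p) * sq y powr ((p-2)/2) * lapRe y
   + c * ((NN - 2*p) * (norm y^2) powr (-p) * sq y powr (p/2) + p * (norm y^2) powr (-p) * sq y powr (p/2 - 1) * yR y))"

lemma eps_pos: "eps n > 0" unfolding eps_def by simp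
lemma eps_le1: "eps n \<le> 1" unfolding eps_def by (simp add: field_simps)
lemma eps_lim: "eps \<longlonglongrightarrow> 0" unfolding eps_def by (rule LIMSEQ_inverse_real_of_nat)

lemma sq_zero: assumes "sq y = 0" shows "u y = 0"
  using assms unfolding sq_eq by simp

lemma zero_case: assumes "sq y = 0"
  shows "R e y = 0" "nR2 y = 0" "yR y = 0" "lapRe y = 0" "P \<epsilon> y = 0" "Q \<epsilon> y = 0" "P0 y = 0" "Q0 y = 0"
proof -
  have u0: "u y = 0" by (rule sq_zero[OF assms])
  show R0: "R e y = 0" unfolding R_def u0 by simp
  have "R e' y = 0" for e' unfolding R_def u0 by simp
  then show "nR2 y = 0" "yR y = 0" unfolding nR2_def yR_def by simp_all
  show "lapRe y = 0" unfolding lapRe_def u0 by simp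
  have "R e' y = 0" for e' unfolding R_def u0 by simp
  then have "nR2 y = 0" "yR y = 0" "lapRe y = 0" unfolding nR2_def yR_def lapRe_def u0 by simp_all
  then show "P \<epsilon> y = 0" "Q \<epsilon> y = 0" "P0 y = 0" "Q0 y = 0"
    unfolding P_def Q_def P0_def Q0_def using assms by (simp_all add: chi_def psi_def)
qed

lemma lim_chi: assumes "s > 0" shows "(\<lambda>n. chi (eps n) s) \<longlonglongrightarrow> s powr ((p-2)/2)"
proof -
  have "(\<lambda>n. s * (s + eps n) powr ((p-4)/2)) \<longlonglongrightarrow> s * (s + 0) powr ((p-4)/2)"
    using assms by (intro tendsto_intros eps_lim) auto
  moreover have "s * (s + 0) powr ((p-4)/2) = s powr ((p-2)/2)"
    using powr_mult_self[OF assms, of "(p-4)/2"] by (simp add: field_simps)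
  ultimately show ?thesis unfolding chi_def by simp
qed

lemma lim_chid: assumes "s > 0" shows "(\<lambda>n. chid (eps n) s) \<longlonglongrightarrow> (p-2)/2 * s powr ((p-4)/2)"
proof -
  have lim: "(\<lambda>n. (s + eps n) powr ((p-4)/2) + s * ((p-4)/2 * (s + eps n) powr ((p-4)/2 - 1)))
     \<longlonglongrightarrow> (s + 0) powr ((p-4)/2) + s * ((p-4)/2 * (s + 0) powr ((p-4)/2 - 1))"
    using assms by (intro tendsto_intros eps_lim) auto
  have eq2: "(s + 0) powr ((p-4)/2) + s * ((p-4)/2 * (s + 0) powr ((p-4)/2 - 1)) = (p-2)/2 * s powr ((p-4)/2)"
  proof -
    have "s * s powr ((p-4)/2 - 1) = s powr ((p-4)/2)"
      using powr_mult_self[OF assms, of "(p-4)/2 - 1"] by simp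
    then have eq: "s * ((p-4)/2 * s powr ((p-4)/2 - 1)) = (p-4)/2 * s powr ((p-4)/2)"
      by (subst mult.left_commute) (simp only:)
    show ?thesis unfolding add_0_right eq by (simp add: field_simps)
  qed
  show ?thesis unfolding chid_def using lim unfolding eq2 .
qed

lemma lim_psi: assumes "s > 0" shows "(\<lambda>n. psi (eps n) s) \<longlonglongrightarrow> s powr (p/2)"
proof -
  have "(\<lambda>n. eps n powr (p/2)) \<longlonglongrightarrow> 0"
  proof (rule tendsto_zero_powrI[OF eps_lim])
    show "eventually (\<lambda>n. 0 \<le> eps n) sequentially"
      by (rule always_eventually) (simp add: eps_pos less_imp_le)
  qed (use p1 in auto)
  moreover have "(\<lambda>n. (s + eps n) powr (p/2)) \<longlonglongrightarrow> (s + 0) powr (p/2)"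
    using assms by (intro tendsto_intros eps_lim) auto
  ultimately have "(\<lambda>n. (s + eps n) powr (p/2) - eps n powr (p/2)) \<longlonglongrightarrow> (s + 0) powr (p/2) - 0"
    by (intro tendsto_diff)
  then show ?thesis unfolding psi_def by simp
qed

lemma lim_psid: assumes "s > 0" shows "(\<lambda>n. psid (eps n) s) \<longlonglongrightarrow> p/2 * s powr (p/2 - 1)"
proof -
  have "(\<lambda>n. p/2 * (s + eps n) powr (p/2 - 1)) \<longlonglongrightarrow> p/2 * (s + 0) powr (p/2 - 1)"
    using assms by (intro tendsto_intros eps_lim) auto
  then show ?thesis unfolding psid_def by simp
qed

lemma lim_P: "(\<lambda>n. P (eps n) y) \<longlonglongrightarrow> P0 y"
proof (cases "sq y = 0")
  case True then show ?thesis using zero_case[OF True] by simp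
next
  case False
  then have s: "sq y > 0" using sq_nonneg[of y] by simp
  have "(\<lambda>n. (norm y^2) powr (1-p) * (2 * chid (eps n) (sq y) * nR2 y + chi (eps n) (sq y) * gn y))
    \<longlonglongrightarrow> (norm y^2) powr (1-p) * (2 * ((p-2)/2 * sq y powr ((p-4)/2)) * nR2 y + sq y powr ((p-2)/2) * gn y)"
    by (intro tendsto_intros lim_chi[OF s] lim_chid[OF s])
  then show ?thesis unfolding P_def P0_def using False by simp
qed

lemma lim_Q: "(\<lambda>n. Q (eps n) y) \<longlonglongrightarrow> Q0 y"
proof (cases "sq y = 0")
  case True then show ?thesis using zero_case[OF True] by simp
next
  case False
  then have s: "sq y > 0" using sq_nonneg[of y] by simp
  have "(\<lambda>n. 2*(1-p) * (norm y^2) powr (-p) * chi (eps n) (sq y) * yR y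
   + (norm y^2) powr (1-p) * chi (eps n) (sq y) * lapRe y
   + c * ((NN - 2*p) * (norm y^2) powr (-p) * psi (eps n) (sq y) + 2 * (norm y^2) powr (-p) * psid (eps n) (sq y) * yR y))
    \<longlonglongrightarrow> 2*(1-p) * (norm y^2) powr (-p) * sq y powr ((p-2)/2) * yR y
   + (norm y^2) powr (1-p) * sq y powr ((p-2)/2) * lapRe y
   + c * ((NN - 2*p) * (norm y^2) powr (-p) * sq y powr (p/2) + 2 * (norm y^2) powr (-p) * (p/2 * sq y powr (p/2 - 1)) * yR y)"
    by (intro tendsto_intros lim_chi[OF s] lim_psi[OF s] lim_psid[OF s])
  then show ?thesis unfolding Q_def Q0_def using False by (simp add: algebra_simps)
qed

end


lemma X_split: "(X::real) > 0 \<Longrightarrow> X powr a = X * X powr (a - 1)"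
  using powr_mult_self[of X "a - 1"] by simp

lemma P_scalar_nonneg:
  fixes W G N2 s \<epsilon> p a :: real
  assumes W: "W \<ge> 0" and G: "G \<ge> 0" and N2: "0 \<le> N2" "N2 \<le> s * G" and s: "s \<ge> 0" and e: "\<epsilon> > 0"
    and a: "a = (p-4)/2" and p: "p > 1"
  shows "0 \<le> W * (2 * ((s + \<epsilon>) powr a + s * (a * (s+\<epsilon>) powr (a - 1))) * N2 + s * (s + \<epsilon>) powr a * G)"
proof -
  define X where "X = s + \<epsilon>"
  have X: "X > 0" unfolding X_def using s e by simp
  define q where "q = X powr (a - 1)"
  have q: "q > 0" unfolding q_def using X by simp
  have Xa: "X powr a = X * q" unfolding q_def by (rule X_split[OF X])
  have eq: "2 * (X powr a + s * (a * X powr (a - 1))) * N2 + s * X powr a * G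
       = q * (2 * (X + a * s) * N2 + s * X * G)"
    unfolding Xa q_def[symmetric] by (simp add: algebra_simps)
  have inner: "0 \<le> 2 * (X + a * s) * N2 + s * X * G"
  proof (cases "X + a * s \<ge> 0")
    case True
    have "0 \<le> 2 * (X + a * s) * N2" using True N2 by simp
    moreover have "0 \<le> s * X * G" using s X G by simp
    ultimately show ?thesis by linarith
  next
    case False
    then have "2 * (X + a * s) * N2 \<ge> 2 * (X + a * s) * (s * G)"
      using N2(2) by (intro mult_left_mono_neg) auto
    moreover have "2 * (X + a * s) * (s * G) + s * X * G = s * G * ((p - 1) * s + 3 * \<epsilon>)"
      unfolding X_def a by (simp add: field_simps)
    moreover have "s * G * ((p - 1) * s + 3 * \<epsilon>) \<ge> 0"
      using s G p e by (intro mult_nonneg_nonneg) auto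
    ultimately show ?thesis by linarith
  qed
  have "0 \<le> q * (2 * (X + a * s) * N2 + s * X * G)" using q inner by simp
  then show ?thesis unfolding X_def[symmetric] using eq W by simp
qed

lemma P_scalar_upper:
  fixes W G N2 s \<epsilon> a :: real
  assumes W: "W \<ge> 0" and G: "G \<ge> 0" and N2: "0 \<le> N2" "N2 \<le> s * G" and s: "s \<ge> 0" and e: "\<epsilon> > 0" "\<epsilon> \<le> 1"
  shows "W * (2 * ((s + \<epsilon>) powr a + s * (a * (s+\<epsilon>) powr (a - 1))) * N2 + s * (s + \<epsilon>) powr a * G)
    \<le> (3 + 2 * \<bar>a\<bar>) * (W * G * (if s = 0 then 0 else s powr (a + 1)) + W * G * (s * (s + 1) powr a))"
proof -
  define X where "X = s + \<epsilon>"
  have X: "X > 0" unfolding X_def using s e by simp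
  have sX: "s \<le> X" unfolding X_def using e by simp
  have sXa: "s * X powr (a - 1) \<le> X powr a"
    using X_split[OF X, of a] sX X by (simp add: mult_right_mono)
  have h1: "\<bar>X powr a + s * (a * X powr (a - 1))\<bar> \<le> (1 + \<bar>a\<bar>) * X powr a"
  proof -
    have "\<bar>X powr a + s * (a * X powr (a - 1))\<bar> \<le> X powr a + \<bar>a\<bar> * (s * X powr (a - 1))"
      using s by (simp add: abs_mult abs_triangle_ineq[THEN order_trans] mult_ac)
    also have "\<dots> \<le> X powr a + \<bar>a\<bar> * X powr a"
      using sXa by (intro add_left_mono mult_left_mono) auto
    finally show ?thesis by (simp add: algebra_simps)
  qed
  have h2: "2 * (X powr a + s * (a * X powr (a - 1))) * N2 \<le> 2 * ((1 + \<bar>a\<bar>) * X powr a) * (s * G)"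
  proof -
    have "2 * (X powr a + s * (a * X powr (a - 1))) * N2 \<le> 2 * \<bar>X powr a + s * (a * X powr (a - 1))\<bar> * N2"
    proof -
      have "2 * (X powr a + s * (a * X powr (a - 1))) \<le> 2 * \<bar>X powr a + s * (a * X powr (a - 1))\<bar>"
        by (intro mult_left_mono abs_ge_self) simp
      then show ?thesis by (rule mult_right_mono) (rule N2(1))
    qed
    also have "\<dots> \<le> 2 * ((1 + \<bar>a\<bar>) * X powr a) * (s * G)"
      using h1 N2 by (intro mult_mono) auto
    finally show ?thesis .
  qed
  have inner: "2 * (X powr a + s * (a * X powr (a - 1))) * N2 + s * X powr a * G \<le> (3 + 2 * \<bar>a\<bar>) * (G * (s * X powr a))"
    using h2 by (simp add: algebra_simps)
  have h3: "s * X powr a \<le> (if s = 0 then 0 else s powr (a + 1)) + s * (s + 1) powr a"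
  proof (cases "s = 0")
    case True then show ?thesis by simp
  next
    case False
    then have spos: "s > 0" using s by simp
    show ?thesis
    proof (cases "a \<le> 0")
      case True
      have "X powr a \<le> s powr a" using powr_mono2'[OF True spos sX] .
      then have "s * X powr a \<le> s * s powr a" using spos by simp
      also have "\<dots> = s powr (a + 1)" by (rule powr_mult_self[OF spos])
      finally show ?thesis using False spos by (simp add: add_increasing2)
    next
      case False
      have "X powr a \<le> (s + 1) powr a" using False X e by (intro powr_mono2) (auto simp: X_def)
      then have "s * X powr a \<le> s * (s + 1) powr a" using spos by simp
      then show ?thesis using spos by (simp add: add_increasing)
    qed
  qed
  have "W * (2 * (X powr a + s * (a * X powr (a - 1))) * N2 + s * X powr a * G)
       \<le> W * ((3 + 2 * \<bar>a\<bar>) * (G * (s * X powr a)))"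
    using inner W by (rule mult_left_mono)
  also have "\<dots> \<le> W * ((3 + 2 * \<bar>a\<bar>) * (G * ((if s = 0 then 0 else s powr (a + 1)) + s * (s + 1) powr a)))"
    using h3 W G by (intro mult_left_mono) auto
  finally show ?thesis unfolding X_def by (simp add: algebra_simps)
qed

lemma P0_scalar_lower:
  fixes W G N2 s p a :: real
  assumes W: "W \<ge> 0" and G: "G \<ge> 0" and N2: "0 \<le> N2" "N2 \<le> s * G" and s: "s > 0" and p: "p > 1"
  shows "min 1 (p - 1) * (W * G * s powr ((p-2)/2)) \<le> W * ((p-2) * s powr ((p-4)/2) * N2 + s powr ((p-2)/2) * G)"
proof -
  have ss: "s * s powr ((p-4)/2) = s powr ((p-2)/2)"
    using powr_mult_self[OF s, of "(p-4)/2"] by (simp add: field_simps)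
  have inner: "min 1 (p - 1) * (G * s powr ((p-2)/2)) \<le> (p-2) * s powr ((p-4)/2) * N2 + s powr ((p-2)/2) * G"
  proof (cases "p \<ge> 2")
    case True
    have "min 1 (p - 1) * (G * s powr ((p-2)/2)) \<le> 1 * (G * s powr ((p-2)/2))"
      using G by (intro mult_right_mono) auto
    moreover have "0 \<le> (p-2) * s powr ((p-4)/2) * N2" using True N2 by simp
    ultimately show ?thesis by (simp add: mult_ac)
  next
    case False
    have "(p-2) * s powr ((p-4)/2) * N2 \<ge> (p-2) * s powr ((p-4)/2) * (s * G)"
    proof (rule mult_left_mono_neg)
      show "(p-2) * s powr ((p-4)/2) \<le> 0" using False by (intro mult_nonpos_nonneg) auto
    qed (rule N2(2))
    also have "(p-2) * s powr ((p-4)/2) * (s * G) = (p-2) * (G * s powr ((p-2)/2))"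
      using ss by (simp add: mult_ac)
    finally have "(p - 1) * (G * s powr ((p-2)/2)) \<le> (p-2) * s powr ((p-4)/2) * N2 + s powr ((p-2)/2) * G"
      by (simp add: algebra_simps)
    moreover have "min 1 (p - 1) * (G * s powr ((p-2)/2)) \<le> (p - 1) * (G * s powr ((p-2)/2))"
      using G by (intro mult_right_mono) auto
    ultimately show ?thesis by linarith
  qed
  show ?thesis using mult_left_mono[OF inner W] by (simp add: mult_ac)
qed


lemma sqrt_le_powr_half:
  fixes v s X :: real
  assumes "v \<ge> 0" "v^2 = s" "s \<le> X"
  shows "v \<le> X powr (1/2)"
proof -
  have "s \<ge> 0" using assms(2) by auto
  then have X: "X \<ge> 0" using assms(3) by simp
  have "v = sqrt s" using assms(1,2) by auto
  also have "\<dots> \<le> sqrt X" using assms(3) by simp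
  also have "\<dots> = X powr (1/2)" using X by (simp add: powr_half_sqrt)
  finally show ?thesis .
qed

lemma B1:
  fixes s \<epsilon> v p :: real
  assumes s: "s \<ge> 0" and e: "\<epsilon> > 0" "\<epsilon> \<le> 1" and v: "v \<ge> 0" "v^2 = s" and p: "p > 1"
  shows "\<bar>s * (s + \<epsilon>) powr ((p-4)/2)\<bar> * v \<le> (s + 1) powr ((p-1)/2)"
proof -
  define X where "X = s + \<epsilon>"
  have X: "X > 0" "s \<le> X" "X \<le> s + 1" unfolding X_def using s e by auto
  have vX: "v \<le> X powr (1/2)" using sqrt_le_powr_half[OF v X(2)] .
  have "\<bar>s * X powr ((p-4)/2)\<bar> * v = s * X powr ((p-4)/2) * v" using s by simp
  also have "\<dots> \<le> X * X powr ((p-4)/2) * X powr (1/2)"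
    using X vX s v by (intro mult_mono) auto
  also have "\<dots> = X powr ((p-1)/2)"
    using powr_mult_self[OF X(1), of "(p-4)/2"] by (simp add: powr_add[symmetric] field_simps)
  also have "\<dots> \<le> (s + 1) powr ((p-1)/2)" using X p by (intro powr_mono2) auto
  finally show ?thesis unfolding X_def .
qed

lemma B2:
  fixes s \<epsilon> p :: real
  assumes s: "s \<ge> 0" and e: "\<epsilon> > 0" "\<epsilon> \<le> 1" and p: "p > 1"
  shows "\<bar>(s + \<epsilon>) powr (p/2) - \<epsilon> powr (p/2)\<bar> \<le> (s + 1) powr (p/2)"
proof -
  have "\<epsilon> powr (p/2) \<le> (s + \<epsilon>) powr (p/2)" using s e p by (intro powr_mono2) auto
  moreover have "(s + \<epsilon>) powr (p/2) \<le> (s + 1) powr (p/2)" using s e p by (intro powr_mono2) auto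
  moreover have "0 \<le> \<epsilon> powr (p/2)" by simp
  ultimately show ?thesis by linarith
qed

lemma B3:
  fixes s \<epsilon> v p :: real
  assumes s: "s \<ge> 0" and e: "\<epsilon> > 0" "\<epsilon> \<le> 1" and v: "v \<ge> 0" "v^2 = s" and p: "p > 1"
  shows "\<bar>p/2 * (s + \<epsilon>) powr (p/2 - 1)\<bar> * v \<le> p/2 * (s + 1) powr ((p-1)/2)"
proof -
  define X where "X = s + \<epsilon>"
  have X: "X > 0" "s \<le> X" "X \<le> s + 1" unfolding X_def using s e by auto
  have vX: "v \<le> X powr (1/2)" using sqrt_le_powr_half[OF v X(2)] .
  have "\<bar>p/2 * X powr (p/2 - 1)\<bar> * v = p/2 * (X powr (p/2 - 1) * v)" using p by simp
  also have "\<dots> \<le> p/2 * (X powr (p/2 - 1) * X powr (1/2))"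
    using vX p by (intro mult_left_mono) auto
  also have "X powr (p/2 - 1) * X powr (1/2) = X powr ((p-1)/2)"
    by (simp add: powr_add[symmetric] field_simps)
  also have "p/2 * X powr ((p-1)/2) \<le> p/2 * (s + 1) powr ((p-1)/2)"
    using X p by (intro mult_left_mono powr_mono2) auto
  finally show ?thesis unfolding X_def .
qed

lemma Q_scalar:
  fixes b w T cl yr lr v ch ps pd B1 B2 B3 c NN p :: real
  assumes "b \<ge> 0" "w \<ge> 0" "T \<ge> 0" "cl \<ge> 0" "v \<ge> 0" "p > 1"
    and yr: "\<bar>yr\<bar> \<le> v * T" and lr: "\<bar>lr\<bar> \<le> v * cl"
    and h1: "\<bar>ch\<bar> * v \<le> B1" and h2: "\<bar>ps\<bar> \<le> B2" and h3: "\<bar>pd\<bar> * v \<le> B3"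
  shows "\<bar>2*(1-p) * b * ch * yr + w * ch * lr + c * ((NN - 2*p) * b * ps + 2 * b * pd * yr)\<bar>
     \<le> 2*(p-1) * b * B1 * T + w * B1 * cl + \<bar>c\<bar> * (\<bar>NN - 2*p\<bar> * b * B2 + 2 * b * B3 * T)"
proof -
  have c1: "\<bar>ch * yr\<bar> \<le> B1 * T"
  proof -
    have "\<bar>ch * yr\<bar> \<le> \<bar>ch\<bar> * (v * T)" unfolding abs_mult using yr by (intro mult_left_mono) auto
    also have "\<dots> = (\<bar>ch\<bar> * v) * T" by simp
    also have "\<dots> \<le> B1 * T" using h1 assms(3) by (rule mult_right_mono)
    finally show ?thesis .
  qed
  have c2: "\<bar>ch * lr\<bar> \<le> B1 * cl"
  proof -
    have "\<bar>ch * lr\<bar> \<le> \<bar>ch\<bar> * (v * cl)" unfolding abs_mult using lr by (intro mult_left_mono) auto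
    also have "\<dots> = (\<bar>ch\<bar> * v) * cl" by simp
    also have "\<dots> \<le> B1 * cl" using h1 assms(4) by (rule mult_right_mono)
    finally show ?thesis .
  qed
  have c3: "\<bar>pd * yr\<bar> \<le> B3 * T"
  proof -
    have "\<bar>pd * yr\<bar> \<le> \<bar>pd\<bar> * (v * T)" unfolding abs_mult using yr by (intro mult_left_mono) auto
    also have "\<dots> = (\<bar>pd\<bar> * v) * T" by simp
    also have "\<dots> \<le> B3 * T" using h3 assms(3) by (rule mult_right_mono)
    finally show ?thesis .
  qed
  have t1: "\<bar>2*(1-p) * b * ch * yr\<bar> \<le> 2*(p-1) * b * (B1 * T)"
  proof -
    have "\<bar>2*(1-p) * b * ch * yr\<bar> = 2*(p-1) * b * \<bar>ch * yr\<bar>" using assms by (simp add: abs_mult)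
    also have "\<dots> \<le> 2*(p-1) * b * (B1 * T)" using c1 assms by (intro mult_left_mono) auto
    finally show ?thesis .
  qed
  have t2: "\<bar>w * ch * lr\<bar> \<le> w * (B1 * cl)"
  proof -
    have "\<bar>w * ch * lr\<bar> = w * \<bar>ch * lr\<bar>" using assms by (simp add: abs_mult)
    also have "\<dots> \<le> w * (B1 * cl)" using c2 assms by (intro mult_left_mono) auto
    finally show ?thesis .
  qed
  have t3: "\<bar>(NN - 2*p) * b * ps\<bar> \<le> \<bar>NN - 2*p\<bar> * b * B2"
  proof -
    have "\<bar>(NN - 2*p) * b * ps\<bar> = \<bar>NN - 2*p\<bar> * b * \<bar>ps\<bar>" using assms by (simp add: abs_mult)
    also have "\<dots> \<le> \<bar>NN - 2*p\<bar> * b * B2" using h2 assms by (intro mult_left_mono) auto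
    finally show ?thesis .
  qed
  have t4: "\<bar>2 * b * pd * yr\<bar> \<le> 2 * b * (B3 * T)"
  proof -
    have "\<bar>2 * b * pd * yr\<bar> = 2 * b * \<bar>pd * yr\<bar>" using assms by (simp add: abs_mult)
    also have "\<dots> \<le> 2 * b * (B3 * T)" using c3 assms by (intro mult_left_mono) auto
    finally show ?thesis .
  qed
  have t5: "\<bar>c * ((NN - 2*p) * b * ps + 2 * b * pd * yr)\<bar> \<le> \<bar>c\<bar> * (\<bar>NN - 2*p\<bar> * b * B2 + 2 * b * (B3 * T))"
    unfolding abs_mult using t3 t4 by (intro mult_left_mono abs_triangle_ineq[THEN order_trans] add_mono) auto
  have "\<bar>2*(1-p) * b * ch * yr + w * ch * lr + c * ((NN - 2*p) * b * ps + 2 * b * pd * yr)\<bar>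
     \<le> \<bar>2*(1-p) * b * ch * yr\<bar> + \<bar>w * ch * lr\<bar> + \<bar>c * ((NN - 2*p) * b * ps + 2 * b * pd * yr)\<bar>"
    by (rule order_trans[OF abs_triangle_ineq add_right_mono[OF abs_triangle_ineq]])
  also have "\<dots> \<le> 2*(p-1) * b * (B1 * T) + w * (B1 * cl) + \<bar>c\<bar> * (\<bar>NN - 2*p\<bar> * b * B2 + 2 * b * (B3 * T))"
    using t1 t2 t5 by linarith
  finally show ?thesis by (simp add: mult_ac)
qed


context cset
begin

definition "T y = (\<Sum>e\<in>Basis. \<bar>y \<bullet> e\<bar> * cmod (partial e u y))"
definition "cl y = (\<Sum>e\<in>Basis. cmod (partial e (partial e u) y))"
definition "KQ y = indicator S y * (2*(p-1) * (norm y^2) powr (-p) * ((sq y + 1) powr ((p-1)/2)) * T y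
   + (norm y^2) powr (1-p) * ((sq y + 1) powr ((p-1)/2)) * cl y
   + \<bar>c\<bar> * (\<bar>NN - 2*p\<bar> * (norm y^2) powr (-p) * (sq y + 1) powr (p/2)
       + 2 * (norm y^2) powr (-p) * (p/2 * (sq y + 1) powr ((p-1)/2)) * T y))"
definition "KP y = indicator S y * ((norm y^2) powr (1-p) * gn y * (sq y * (sq y + 1) powr ((p-4)/2)))"
definition "kap = min 1 (p - 1)"
definition "DomP y = (3 + 2 * \<bar>(p-4)/2\<bar>) * (P0 y / kap + KP y)"

lemma kap_pos: "kap > 0" unfolding kap_def using p1 by simp

lemma Rabs: "\<bar>R e y\<bar> \<le> cmod (u y) * cmod (partial e u y)"
  unfolding R_def using abs_Re_le_cmod[of "cnj (u y) * partial e u y"] by (simp add: norm_mult)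

lemma R_sq: "(R e y)^2 \<le> sq y * (cmod (partial e u y))^2"
proof -
  have "\<bar>R e y\<bar>^2 \<le> (cmod (u y) * cmod (partial e u y))^2"
    by (rule power_mono[OF Rabs abs_ge_zero])
  then show ?thesis unfolding sq_eq by (simp add: power_mult_distrib)
qed

lemma gn_nonneg: "gn y \<ge> 0" unfolding gn_def by (simp add: sum_nonneg)
lemma nR2_nonneg: "nR2 y \<ge> 0" unfolding nR2_def by (simp add: sum_nonneg)
lemma nR2_le: "nR2 y \<le> sq y * gn y"
  unfolding nR2_def gn_def sum_distrib_left by (rule sum_mono) (rule R_sq)
lemma T_nonneg: "T y \<ge> 0" unfolding T_def by (simp add: sum_nonneg)
lemma cl_nonneg: "cl y \<ge> 0" unfolding cl_def by (simp add: sum_nonneg)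

lemma yR_abs: "\<bar>yR y\<bar> \<le> cmod (u y) * T y"
proof -
  have "\<bar>yR y\<bar> \<le> (\<Sum>e\<in>Basis. \<bar>(y \<bullet> e) * R e y\<bar>)" unfolding yR_def by (rule sum_abs)
  also have "\<dots> \<le> (\<Sum>e\<in>Basis. cmod (u y) * (\<bar>y \<bullet> e\<bar> * cmod (partial e u y)))"
  proof (rule sum_mono)
    fix e :: 'a
    have "\<bar>(y \<bullet> e) * R e y\<bar> = \<bar>y \<bullet> e\<bar> * \<bar>R e y\<bar>" by (simp add: abs_mult)
    also have "\<dots> \<le> \<bar>y \<bullet> e\<bar> * (cmod (u y) * cmod (partial e u y))"
      by (intro mult_left_mono Rabs) simp
    finally show "\<bar>(y \<bullet> e) * R e y\<bar> \<le> cmod (u y) * (\<bar>y \<bullet> e\<bar> * cmod (partial e u y))"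
      by (simp add: mult_ac)
  qed
  also have "\<dots> = cmod (u y) * T y" unfolding T_def by (simp add: sum_distrib_left)
  finally show ?thesis .
qed

lemma lapRe_abs: "\<bar>lapRe y\<bar> \<le> cmod (u y) * cl y"
proof -
  have "\<bar>lapRe y\<bar> \<le> (\<Sum>e\<in>Basis. \<bar>Re (cnj (u y) * partial e (partial e u) y)\<bar>)" unfolding lapRe_def by (rule sum_abs)
  also have "\<dots> \<le> (\<Sum>e\<in>Basis. cmod (u y) * cmod (partial e (partial e u) y))"
  proof (rule sum_mono)
    fix e :: 'a
    show "\<bar>Re (cnj (u y) * partial e (partial e u) y)\<bar> \<le> cmod (u y) * cmod (partial e (partial e u) y)"
      using abs_Re_le_cmod[of "cnj (u y) * partial e (partial e u) y"] by (simp add: norm_mult)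
  qed
  also have "\<dots> = cmod (u y) * cl y" unfolding cl_def by (simp add: sum_distrib_left)
  finally show ?thesis .
qed

lemma Q_bound: assumes "\<epsilon> > 0" "\<epsilon> \<le> 1" shows "\<bar>Q \<epsilon> y\<bar> \<le> KQ y"
proof (cases "y \<in> S")
  case False then show ?thesis using Dsum_out(3)[OF False] by (simp add: KQ_def)
next
  case True
  have v: "cmod (u y) \<ge> 0" "(cmod (u y))^2 = sq y" using sq_eq by auto
  have s: "sq y \<ge> 0" by (rule sq_nonneg)
  have "\<bar>Q \<epsilon> y\<bar> \<le> 2*(p-1) * (norm y^2) powr (-p) * ((sq y + 1) powr ((p-1)/2)) * T y
   + (norm y^2) powr (1-p) * ((sq y + 1) powr ((p-1)/2)) * cl y
   + \<bar>c\<bar> * (\<bar>NN - 2*p\<bar> * (norm y^2) powr (-p) * (sq y + 1) powr (p/2)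
       + 2 * (norm y^2) powr (-p) * (p/2 * (sq y + 1) powr ((p-1)/2)) * T y)"
    unfolding Q_def
    by (rule Q_scalar[OF _ _ T_nonneg cl_nonneg v(1) p1 yR_abs lapRe_abs
          B1[OF s assms v p1, folded chi_def] B2[OF s assms p1, folded psi_def] B3[OF s assms v p1, folded psid_def]])
       simp_all
  then show ?thesis using True by (simp add: KQ_def)
qed

lemma P_nonneg: assumes "\<epsilon> > 0" shows "P \<epsilon> y \<ge> 0"
  unfolding P_def chid_def chi_def
  by (rule P_scalar_nonneg[OF _ gn_nonneg nR2_nonneg nR2_le sq_nonneg assms refl p1]) simp

lemma P0_lower: assumes "sq y > 0"
  shows "kap * ((norm y^2) powr (1-p) * gn y * sq y powr ((p-2)/2)) \<le> P0 y"
  using P0_scalar_lower[OF _ gn_nonneg nR2_nonneg nR2_le assms p1, of "(norm y^2) powr (1-p)"] assms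
  unfolding P0_def kap_def by simp

lemma P0_nonneg: "P0 y \<ge> 0"
proof (cases "sq y = 0")
  case True then show ?thesis by (simp add: P0_def)
next
  case False
  then have "sq y > 0" using sq_nonneg[of y] by simp
  from P0_lower[OF this] kap_pos show ?thesis
    by (smt (verit) gn_nonneg mult_nonneg_nonneg powr_ge_zero)
qed

lemma KP_nonneg: "KP y \<ge> 0"
  unfolding KP_def using gn_nonneg sq_nonneg by (simp add: indicator_def)

lemma P_bound: assumes "\<epsilon> > 0" "\<epsilon> \<le> 1" shows "P \<epsilon> y \<le> DomP y"
proof (cases "y \<in> S")
  case False
  have "0 \<le> DomP y" unfolding DomP_def using P0_nonneg KP_nonneg kap_pos
    by (intro mult_nonneg_nonneg add_nonneg_nonneg divide_nonneg_pos) auto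
  then show ?thesis using Dsum_out(2)[OF False] by simp
next
  case True
  define W where "W = (norm y^2) powr (1-p)"
  have W: "W \<ge> 0" unfolding W_def by simp
  have up: "P \<epsilon> y \<le> (3 + 2 * \<bar>(p-4)/2\<bar>) * (W * gn y * (if sq y = 0 then 0 else sq y powr ((p-4)/2 + 1))
      + W * gn y * (sq y * (sq y + 1) powr ((p-4)/2)))"
    unfolding P_def chid_def chi_def W_def
    by (rule P_scalar_upper[OF _ gn_nonneg nR2_nonneg nR2_le sq_nonneg assms]) simp
  have mid: "W * gn y * (if sq y = 0 then 0 else sq y powr ((p-4)/2 + 1)) \<le> P0 y / kap"
  proof (cases "sq y = 0")
    case True then show ?thesis using P0_nonneg kap_pos by simp
  next
    case False
    then have sp: "sq y > 0" using sq_nonneg[of y] by simp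
    have e: "(p-4)/2 + 1 = (p-2)/2" by (simp add: field_simps)
    have "kap * (W * gn y * sq y powr ((p-2)/2)) \<le> P0 y" using P0_lower[OF sp] unfolding W_def .
    then show ?thesis using False kap_pos unfolding e by (simp add: field_simps)
  qed
  have "P \<epsilon> y \<le> (3 + 2 * \<bar>(p-4)/2\<bar>) * (P0 y / kap + W * gn y * (sq y * (sq y + 1) powr ((p-4)/2)))"
    using up mid by (smt (verit) mult_left_mono abs_ge_zero)
  then show ?thesis using True unfolding DomP_def KP_def W_def by simp
qed

end


context cset
begin

lemma sq_cont: "continuous_on A sq"
  unfolding sq_def by (intro continuous_intros uc)
lemma R_cont: "e \<in> Basis \<Longrightarrow> continuous_on A (R e)"
  unfolding R_def by (intro continuous_intros uc udc)
lemma nR2_cont: "continuous_on A nR2"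
  unfolding nR2_def by (intro continuous_on_sum continuous_intros R_cont) 
lemma gn_cont: "continuous_on A gn"
  unfolding gn_def by (intro continuous_on_sum continuous_intros udc)
lemma yR_cont: "continuous_on A yR"
  unfolding yR_def by (intro continuous_on_sum continuous_intros R_cont)
lemma lapRe_cont: "continuous_on A lapRe"
  unfolding lapRe_def by (intro continuous_on_sum continuous_intros uc uddc)
lemma T_cont: "continuous_on A T"
  unfolding T_def by (intro continuous_on_sum continuous_intros udc)
lemma cl_cont: "continuous_on A cl"
  unfolding cl_def by (intro continuous_on_sum continuous_intros uddc)

lemma sq_meas[measurable]: "sq \<in> borel_measurable borel"
  by (rule borel_measurable_continuous_onI[OF sq_cont])
lemma nR2_meas[measurable]: "nR2 \<in> borel_measurable borel"
  by (rule borel_measurable_continuous_onI[OF nR2_cont])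
lemma gn_meas[measurable]: "gn \<in> borel_measurable borel"
  by (rule borel_measurable_continuous_onI[OF gn_cont])
lemma yR_meas[measurable]: "yR \<in> borel_measurable borel"
  by (rule borel_measurable_continuous_onI[OF yR_cont])
lemma lapRe_meas[measurable]: "lapRe \<in> borel_measurable borel"
  by (rule borel_measurable_continuous_onI[OF lapRe_cont])

lemma P_meas[measurable]: "P \<epsilon> \<in> borel_measurable borel"
  unfolding P_def chid_def chi_def by measurable
lemma Q_meas[measurable]: "Q \<epsilon> \<in> borel_measurable borel"
  unfolding Q_def chi_def psi_def psid_def by measurable
lemma P0_meas[measurable]: "P0 \<in> borel_measurable borel"
  unfolding P0_def by measurable
lemma Q0_meas[measurable]: "Q0 \<in> borel_measurable borel"
  unfolding Q0_def by measurable

lemma KQ_int: "integrable lborel KQ"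
proof -
  have "integrable lborel (\<lambda>y. indicator S y *\<^sub>R (2*(p-1) * (norm y^2) powr (-p) * ((sq y + 1) powr ((p-1)/2)) * T y
   + (norm y^2) powr (1-p) * ((sq y + 1) powr ((p-1)/2)) * cl y
   + \<bar>c\<bar> * (\<bar>NN - 2*p\<bar> * (norm y^2) powr (-p) * (sq y + 1) powr (p/2)
       + 2 * (norm y^2) powr (-p) * (p/2 * (sq y + 1) powr ((p-1)/2)) * T y)))"
  proof (rule borel_integrable_compact[OF S_compact])
    have s1: "\<forall>y\<in>S. sq y + 1 \<noteq> 0" using sq_nonneg by (metis add_nonneg_pos less_irrefl zero_less_one)
    show "continuous_on S (\<lambda>y. 2*(p-1) * (norm y^2) powr (-p) * ((sq y + 1) powr ((p-1)/2)) * T y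
   + (norm y^2) powr (1-p) * ((sq y + 1) powr ((p-1)/2)) * cl y
   + \<bar>c\<bar> * (\<bar>NN - 2*p\<bar> * (norm y^2) powr (-p) * (sq y + 1) powr (p/2)
       + 2 * (norm y^2) powr (-p) * (p/2 * (sq y + 1) powr ((p-1)/2)) * T y))"
      by (intro continuous_intros sq_cont T_cont cl_cont ne0 s1)
  qed
  then show ?thesis unfolding KQ_def by simp
qed

lemma KP_int: "integrable lborel KP"
proof -
  have "integrable lborel (\<lambda>y. indicator S y *\<^sub>R ((norm y^2) powr (1-p) * gn y * (sq y * (sq y + 1) powr ((p-4)/2))))"
  proof (rule borel_integrable_compact[OF S_compact])
    have s1: "\<forall>y\<in>S. sq y + 1 \<noteq> 0" using sq_nonneg by (metis add_nonneg_pos less_irrefl zero_less_one)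
    show "continuous_on S (\<lambda>y. (norm y^2) powr (1-p) * gn y * (sq y * (sq y + 1) powr ((p-4)/2)))"
      by (intro continuous_intros sq_cont gn_cont ne0 s1)
  qed
  then show ?thesis unfolding KP_def by simp
qed

end


context cset
begin

lemma Dsum_PQ: "Dsum \<epsilon> = (\<lambda>y. P \<epsilon> y + Q \<epsilon> y)"
proof (rule ext)
  fix y show "Dsum \<epsilon> y = P \<epsilon> y + Q \<epsilon> y"
    by (cases "y \<in> S") (simp_all add: Dsum_eq Dsum_out)
qed

lemma key:
  shows "integrable lborel P0" "integrable lborel Q0" "integral\<^sup>L lborel P0 + integral\<^sup>L lborel Q0 = 0"
proof -
  have KQm: "KQ \<in> borel_measurable lborel" using KQ_int by (rule borel_measurable_integrable)
  have Qb: "AE y in lborel. norm (Q (eps n) y) \<le> KQ y" for n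
    using Q_bound[OF eps_pos eps_le1] by simp
  have Qlim: "AE y in lborel. (\<lambda>n. Q (eps n) y) \<longlonglongrightarrow> Q0 y" using lim_Q by simp
  have Q0m: "Q0 \<in> borel_measurable lborel" by simp
  have Qm: "Q (eps n) \<in> borel_measurable lborel" for n by simp
  show Q0i: "integrable lborel Q0"
    by (rule integrable_dominated_convergence[OF Q0m Qm KQ_int Qlim Qb])
  have Qi: "integrable lborel (Q (eps n))" for n
    by (rule integrable_dominated_convergence2[OF Q0m Qm KQ_int Qlim Qb])
  have QL: "(\<lambda>n. integral\<^sup>L lborel (Q (eps n))) \<longlonglongrightarrow> integral\<^sup>L lborel Q0"
    by (rule integral_dominated_convergence[OF Q0m Qm KQ_int Qlim Qb])
  have Pi: "integrable lborel (P (eps n))" for n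
  proof -
    have "integrable lborel (\<lambda>y. Dsum (eps n) y - Q (eps n) y)"
      by (intro Bochner_Integration.integrable_diff Dsum_int(1) eps_pos Qi)
    then show ?thesis unfolding Dsum_PQ by simp
  qed
  have PQ0: "integral\<^sup>L lborel (P (eps n)) + integral\<^sup>L lborel (Q (eps n)) = 0" for n
  proof -
    have "integral\<^sup>L lborel (Dsum (eps n)) = 0" using Dsum_int(2)[OF eps_pos] .
    then show ?thesis unfolding Dsum_PQ using Pi Qi by (simp add: Bochner_Integration.integral_add)
  qed
  have Pm: "(\<lambda>y. ennreal (P (eps n) y)) \<in> borel_measurable lborel" for n by simp
  have "(\<integral>\<^sup>+y. ennreal (P0 y) \<partial>lborel) = (\<integral>\<^sup>+y. liminf (\<lambda>n. ennreal (P (eps n) y)) \<partial>lborel)"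
  proof (rule nn_integral_cong)
    fix y
    have "(\<lambda>n. ennreal (P (eps n) y)) \<longlonglongrightarrow> ennreal (P0 y)" using lim_P by (rule tendsto_ennrealI)
    then show "ennreal (P0 y) = liminf (\<lambda>n. ennreal (P (eps n) y))"
      by (simp add: lim_imp_Liminf)
  qed
  also have "\<dots> \<le> liminf (\<lambda>n. \<integral>\<^sup>+y. ennreal (P (eps n) y) \<partial>lborel)"
    by (rule nn_integral_liminf[OF Pm])
  also have "\<dots> = liminf (\<lambda>n. ennreal (- integral\<^sup>L lborel (Q (eps n))))"
  proof -
    have "(\<integral>\<^sup>+y. ennreal (P (eps n) y) \<partial>lborel) = ennreal (- integral\<^sup>L lborel (Q (eps n)))" for n
    proof -
      have "(\<integral>\<^sup>+y. ennreal (P (eps n) y) \<partial>lborel) = ennreal (integral\<^sup>L lborel (P (eps n)))"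
        using Pi P_nonneg[OF eps_pos] by (intro nn_integral_eq_integral) auto
      also have "integral\<^sup>L lborel (P (eps n)) = - integral\<^sup>L lborel (Q (eps n))" using PQ0[of n] by simp
      finally show ?thesis .
    qed
    then show ?thesis by simp
  qed
  also have "\<dots> = ennreal (- integral\<^sup>L lborel Q0)"
  proof -
    have "(\<lambda>n. ennreal (- integral\<^sup>L lborel (Q (eps n)))) \<longlonglongrightarrow> ennreal (- integral\<^sup>L lborel Q0)"
      by (intro tendsto_ennrealI tendsto_minus QL)
    then show ?thesis by (simp add: lim_imp_Liminf)
  qed
  finally have fin: "(\<integral>\<^sup>+y. ennreal (P0 y) \<partial>lborel) < \<infinity>"
    by (simp add: le_less_trans)
  show P0i: "integrable lborel P0"
    by (rule integrableI_nonneg) (use fin P0_nonneg in auto)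
  have Domi: "integrable lborel DomP"
    unfolding DomP_def using P0i KP_int by (intro Bochner_Integration.integrable_mult_right Bochner_Integration.integrable_add Bochner_Integration.integrable_divide) auto
  have P0m: "P0 \<in> borel_measurable lborel" by simp
  have Pm': "P (eps n) \<in> borel_measurable lborel" for n by simp
  have Pb: "AE y in lborel. norm (P (eps n) y) \<le> DomP y" for n
    using P_bound[OF eps_pos eps_le1] P_nonneg[OF eps_pos] by simp
  have Plim: "AE y in lborel. (\<lambda>n. P (eps n) y) \<longlonglongrightarrow> P0 y" using lim_P by simp
  have PL: "(\<lambda>n. integral\<^sup>L lborel (P (eps n))) \<longlonglongrightarrow> integral\<^sup>L lborel P0"
    by (rule integral_dominated_convergence[OF P0m Pm' Domi Plim Pb])
  have "(\<lambda>n. integral\<^sup>L lborel (P (eps n)) + integral\<^sup>L lborel (Q (eps n))) \<longlonglongrightarrow> integral\<^sup>L lborel P0 + integral\<^sup>L lborel Q0"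
    by (rule tendsto_add[OF PL QL])
  then show "integral\<^sup>L lborel P0 + integral\<^sup>L lborel Q0 = 0"
    unfolding PQ0 by (simp add: LIMSEQ_const_iff)
qed

end


lemma inner_basis_sum:
  fixes f :: "'a::euclidean_space \<Rightarrow> real"
  shows "(\<Sum>e\<in>Basis. f e *\<^sub>R e) \<bullet> y = (\<Sum>e\<in>Basis. f e * (y \<bullet> e))"
  unfolding inner_sum_left inner_scaleR_left by (simp add: inner_commute)

lemma norm_basis_sum_sq:
  fixes f :: "'a::euclidean_space \<Rightarrow> real"
  shows "(norm (\<Sum>e\<in>Basis. f e *\<^sub>R e))^2 = (\<Sum>e\<in>Basis. (f e)^2)"
proof -
  have "(norm (\<Sum>e\<in>Basis. f e *\<^sub>R e))^2 = (\<Sum>e\<in>Basis. f e *\<^sub>R e) \<bullet> (\<Sum>e\<in>Basis. f e *\<^sub>R e)"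
    by (simp add: power2_norm_eq_inner)
  also have "\<dots> = (\<Sum>e\<in>Basis. f e * ((\<Sum>e\<in>Basis. f e *\<^sub>R e) \<bullet> e))" by (rule inner_basis_sum)
  also have "\<dots> = (\<Sum>e\<in>Basis. (f e)^2)"
    by (rule sum.cong) (simp_all add: power2_eq_square)
  finally show ?thesis .
qed

context cset
begin

lemma dsq_line: assumes e: "e \<in> Basis"
  shows "((\<lambda>t. sq (x + t *\<^sub>R e)) has_real_derivative 2 * R e x) (at 0)"
proof -
  have hg: "((\<lambda>t. u (x + t *\<^sub>R e)) has_vector_derivative partial e u x) (at 0)"
    by (rule smooth_line_deriv[OF sm e])
  have "((\<lambda>t. Re (cnj (u (x + t *\<^sub>R e)) * u (x + t *\<^sub>R e))) has_real_derivative
     Re (cnj (u (x + 0 *\<^sub>R e)) * partial e u x + cnj (partial e u x) * u (x + 0 *\<^sub>R e))) (at 0)"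
    by (rule has_field_derivative_Re[OF has_vector_derivative_mult[OF has_vector_derivative_cnj[OF hg] hg]])
  then show ?thesis unfolding sq_def R_def
    by (rule DERIV_cong) (simp add: algebra_simps)
qed

lemma cmod_sqrt: "cmod (u y) = sqrt (sq y)"
  unfolding sq_eq by simp

lemma partial_cmod: assumes e: "e \<in> Basis" and nz: "u x \<noteq> 0"
  shows "partial e (\<lambda>y. cmod (u y)) x = R e x / cmod (u x)"
proof -
  have spos: "sq (x + 0 *\<^sub>R e) > 0" using nz unfolding sq_eq by simp
  have "((\<lambda>t. sqrt (sq (x + t *\<^sub>R e))) has_real_derivative
      inverse (sqrt (sq (x + 0 *\<^sub>R e))) / 2 * (2 * R e x)) (at 0)"
    by (rule DERIV_chain2[OF DERIV_real_sqrt[OF spos] dsq_line[OF e]])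
  then have "((\<lambda>t. cmod (u (x + t *\<^sub>R e))) has_real_derivative R e x / cmod (u x)) (at 0)"
    unfolding cmod_sqrt[symmetric] by (rule DERIV_cong) (simp add: cmod_sqrt field_simps)
  then show ?thesis unfolding partial_def
    by (intro vector_derivative_at) (simp add: has_real_derivative_iff_has_vector_derivative)
qed

lemma grad_cmod: assumes nz: "u x \<noteq> 0"
  shows "grad (\<lambda>y. cmod (u y)) x = (\<Sum>e\<in>Basis. (R e x / cmod (u x)) *\<^sub>R e)"
  unfolding grad_def by (rule sum.cong) (simp_all add: partial_cmod nz)

lemma grad_norm_sq_eq: "(norm (grad (\<lambda>y. cmod (u y)) x))^2 = nR2 x / sq x" if "u x \<noteq> 0"
proof -
  have "(norm (grad (\<lambda>y. cmod (u y)) x))^2 = (\<Sum>e\<in>Basis. (R e x / cmod (u x))^2)"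
    unfolding grad_cmod[OF that] by (rule norm_basis_sum_sq)
  also have "\<dots> = nR2 x / sq x" unfolding nR2_def sq_eq
    by (simp add: power_divide sum_divide_distrib)
  finally show ?thesis .
qed

lemma grad_shift_sq: "(norm (grad (\<lambda>y. cmod (u y)) x + k *\<^sub>R x))^2
     = nR2 x / sq x + 2 * k * yR x / cmod (u x) + k^2 * (norm x)^2" if "u x \<noteq> 0"
proof -
  define z where "z = grad (\<lambda>y. cmod (u y)) x"
  have zx: "z \<bullet> x = yR x / cmod (u x)"
    unfolding z_def grad_cmod[OF that] inner_basis_sum yR_def
    by (simp add: sum_divide_distrib mult_ac)
  have zz: "z \<bullet> z = nR2 x / sq x"
    using grad_norm_sq_eq[OF that] unfolding z_def power2_norm_eq_inner .
  have "(norm (z + k *\<^sub>R x))^2 = z \<bullet> z + 2 * k * (z \<bullet> x) + k^2 * (x \<bullet> x)"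
    unfolding power2_norm_eq_inner
    by (simp add: inner_add_left inner_add_right inner_commute power2_eq_square algebra_simps)
  then show ?thesis unfolding z_def[symmetric] zz zx
    by (simp add: power2_norm_eq_inner)
qed

end


lemma pw_sq: fixes v r :: real assumes "v > 0" shows "v powr r = (v^2) powr (r/2)"
proof -
  have h: "v powr (real 2) = v^2" by (rule powr_realpow[OF assms])
  have "(v^2) powr (r/2) = (v powr 2) powr (r/2)" using h by simp
  also have "\<dots> = v powr r" by (simp add: powr_powr)
  finally show ?thesis by simp
qed

lemma pw_div: fixes s a :: real assumes "s > 0" shows "s powr a / s = s powr (a - 1)"
  using assms by (simp add: powr_diff)

lemma pw_mul: fixes s a :: real assumes "s > 0" shows "s powr a * s = s powr (a + 1)"
  using powr_mult_self[OF assms, of a] by (simp add: mult.commute)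

context cset
begin

definition "A1 x = (if sq x = 0 then 0 else (norm x^2) powr (1-p) * sq x powr ((p-2)/2) * gn x)"
definition "A2 x = (if sq x = 0 then 0 else (norm x^2) powr (1-p) * sq x powr ((p-4)/2) * nR2 x)"
definition "A3 x = (if sq x = 0 then 0 else (norm x^2) powr (-p) * sq x powr ((p-2)/2) * yR x)"
definition "A4 x = (if sq x = 0 then 0 else (norm x^2) powr (1-p) * sq x powr ((p-2)/2) * lapRe x)"
definition "A5 x = (if sq x = 0 then 0 else (norm x^2) powr (-p) * sq x powr (p/2))"

lemma A_meas[measurable]: "A1 \<in> borel_measurable borel" "A2 \<in> borel_measurable borel"
  "A3 \<in> borel_measurable borel" "A4 \<in> borel_measurable borel" "A5 \<in> borel_measurable borel"
  unfolding A1_def A2_def A3_def A4_def A5_def by measurable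

lemma P0_A: "P0 x = (p-2) * A2 x + A1 x"
  unfolding P0_def A1_def A2_def by (simp add: algebra_simps)

lemma Q0_A: "Q0 x = (2*(1-p) + c*p) * A3 x + A4 x + c*(NN-2*p) * A5 x"
proof -
  have e: "p/2 - 1 = (p-2)/2" by (simp add: field_simps)
  show ?thesis unfolding Q0_def A3_def A4_def A5_def e by (simp add: algebra_simps)
qed

lemma sq_pos_S: assumes "sq x > 0" shows "x \<in> S"
proof (rule ccontr)
  assume "x \<notin> S"
  then have "u x = 0" by (rule u_out)
  then show False using assms unfolding sq_eq by simp
qed

lemma int_dom:
  fixes g h :: "'a \<Rightarrow> real"
  assumes "g \<in> borel_measurable borel" "continuous_on S h" "\<And>x. \<bar>g x\<bar> \<le> indicator S x * h x"
  shows "integrable lborel g"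
proof -
  have "integrable lborel (\<lambda>x. indicator S x *\<^sub>R h x)" by (rule borel_integrable_compact[OF S_compact assms(2)])
  then have i: "integrable lborel (\<lambda>x. indicator S x * h x)" by simp
  show ?thesis
  proof (rule Bochner_Integration.integrable_bound[OF i])
    show "g \<in> borel_measurable lborel" using assms(1) by simp
    show "AE x in lborel. norm (g x) \<le> norm (indicator S x * h x)"
    proof (rule AE_I2)
      fix x
      have "norm (g x) \<le> indicator S x * h x" using assms(3)[of x] by simp
      also have "\<dots> \<le> norm (indicator S x * h x)" by simp
      finally show "norm (g x) \<le> norm (indicator S x * h x)" .
    qed
  qed
qed

lemma s1_ne: "\<forall>y\<in>A. sq y + 1 \<noteq> 0" using sq_nonneg by (metis add_nonneg_pos less_irrefl zero_less_one)

lemma spow_v: assumes "sq x > 0" shows "sq x powr ((p-2)/2) * cmod (u x) \<le> (sq x + 1) powr ((p-1)/2)"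
proof -
  have v: "cmod (u x) = sq x powr (1/2)" using assms by (simp add: cmod_sqrt powr_half_sqrt)
  have "sq x powr ((p-2)/2) * cmod (u x) = sq x powr ((p-1)/2)"
    unfolding v by (simp add: powr_add[symmetric] field_simps)
  also have "\<dots> \<le> (sq x + 1) powr ((p-1)/2)" using p1 assms by (intro powr_mono2) auto
  finally show ?thesis .
qed

lemma A1_int: "integrable lborel A1"
proof (rule Bochner_Integration.integrable_bound)
  show "integrable lborel (\<lambda>x. P0 x / kap)" using key(1) by simp
  show "A1 \<in> borel_measurable lborel" by simp
  show "AE x in lborel. norm (A1 x) \<le> norm (P0 x / kap)"
  proof (rule AE_I2)
    fix x
    show "norm (A1 x) \<le> norm (P0 x / kap)"
    proof (cases "sq x = 0")
      case True then show ?thesis by (simp add: A1_def)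
    next
      case False
      then have sp: "sq x > 0" using sq_nonneg[of x] by simp
      have nn: "0 \<le> (norm x^2) powr (1-p) * sq x powr ((p-2)/2) * gn x" using gn_nonneg by simp
      have "kap * ((norm x^2) powr (1-p) * gn x * sq x powr ((p-2)/2)) \<le> P0 x" by (rule P0_lower[OF sp])
      then have "(norm x^2) powr (1-p) * sq x powr ((p-2)/2) * gn x \<le> P0 x / kap"
        using kap_pos by (simp add: field_simps)
      then show ?thesis using False nn P0_nonneg[of x] kap_pos by (simp add: A1_def)
    qed
  qed
qed

lemma A2_le: "0 \<le> A2 x \<and> A2 x \<le> A1 x"
proof (cases "sq x = 0")
  case True then show ?thesis by (simp add: A1_def A2_def)
next
  case False
  then have sp: "sq x > 0" using sq_nonneg[of x] by simp
  have "sq x powr ((p-4)/2) * nR2 x \<le> sq x powr ((p-4)/2) * (sq x * gn x)"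
    using nR2_le by (intro mult_left_mono) auto
  also have "\<dots> = sq x powr ((p-2)/2) * gn x"
    using pw_mul[OF sp, of "(p-4)/2"] by (simp add: field_simps mult_ac)
  finally have "(norm x^2) powr (1-p) * (sq x powr ((p-4)/2) * nR2 x) \<le> (norm x^2) powr (1-p) * (sq x powr ((p-2)/2) * gn x)"
    by (intro mult_left_mono) auto
  then show ?thesis using False nR2_nonneg[of x] by (simp add: A1_def A2_def mult_ac)
qed

lemma A2_int: "integrable lborel A2"
proof (rule Bochner_Integration.integrable_bound[OF A1_int])
  show "A2 \<in> borel_measurable lborel" by simp
  show "AE x in lborel. norm (A2 x) \<le> norm (A1 x)"
  proof (rule AE_I2)
    fix x show "norm (A2 x) \<le> norm (A1 x)" using A2_le[of x] by simp
  qed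
qed

lemma A3_int: "integrable lborel A3"
proof (rule int_dom[where h = "\<lambda>x. (norm x^2) powr (-p) * (sq x + 1) powr ((p-1)/2) * T x"])
  show "A3 \<in> borel_measurable borel" by simp
  show "continuous_on S (\<lambda>x. (norm x^2) powr (-p) * (sq x + 1) powr ((p-1)/2) * T x)"
    by (intro continuous_intros sq_cont T_cont ne0 s1_ne)
  fix x show "\<bar>A3 x\<bar> \<le> indicator S x * ((norm x^2) powr (-p) * (sq x + 1) powr ((p-1)/2) * T x)"
  proof (cases "sq x = 0")
    case True then show ?thesis using T_nonneg by (simp add: A3_def indicator_def)
  next
    case False
    then have sp: "sq x > 0" using sq_nonneg[of x] by simp
    have "\<bar>sq x powr ((p-2)/2) * yR x\<bar> \<le> sq x powr ((p-2)/2) * (cmod (u x) * T x)"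
      unfolding abs_mult by (simp add: mult_left_mono yR_abs)
    also have "\<dots> = (sq x powr ((p-2)/2) * cmod (u x)) * T x" by simp
    also have "\<dots> \<le> (sq x + 1) powr ((p-1)/2) * T x"
      using spow_v[OF sp] T_nonneg by (rule mult_right_mono)
    finally have "(norm x^2) powr (-p) * \<bar>sq x powr ((p-2)/2) * yR x\<bar> \<le> (norm x^2) powr (-p) * ((sq x + 1) powr ((p-1)/2) * T x)"
      by (intro mult_left_mono) auto
    then show ?thesis using False sq_pos_S[OF sp] by (simp add: A3_def abs_mult mult_ac)
  qed
qed

lemma A4_int: "integrable lborel A4"
proof (rule int_dom[where h = "\<lambda>x. (norm x^2) powr (1-p) * (sq x + 1) powr ((p-1)/2) * cl x"])
  show "A4 \<in> borel_measurable borel" by simp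
  show "continuous_on S (\<lambda>x. (norm x^2) powr (1-p) * (sq x + 1) powr ((p-1)/2) * cl x)"
    by (intro continuous_intros sq_cont cl_cont ne0 s1_ne)
  fix x show "\<bar>A4 x\<bar> \<le> indicator S x * ((norm x^2) powr (1-p) * (sq x + 1) powr ((p-1)/2) * cl x)"
  proof (cases "sq x = 0")
    case True then show ?thesis using cl_nonneg by (simp add: A4_def indicator_def)
  next
    case False
    then have sp: "sq x > 0" using sq_nonneg[of x] by simp
    have "\<bar>sq x powr ((p-2)/2) * lapRe x\<bar> \<le> sq x powr ((p-2)/2) * (cmod (u x) * cl x)"
      unfolding abs_mult by (simp add: mult_left_mono lapRe_abs)
    also have "\<dots> = (sq x powr ((p-2)/2) * cmod (u x)) * cl x" by simp
    also have "\<dots> \<le> (sq x + 1) powr ((p-1)/2) * cl x"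
      using spow_v[OF sp] cl_nonneg by (rule mult_right_mono)
    finally have "(norm x^2) powr (1-p) * \<bar>sq x powr ((p-2)/2) * lapRe x\<bar> \<le> (norm x^2) powr (1-p) * ((sq x + 1) powr ((p-1)/2) * cl x)"
      by (intro mult_left_mono) auto
    then show ?thesis using False sq_pos_S[OF sp] by (simp add: A4_def abs_mult mult_ac)
  qed
qed

lemma A5_int: "integrable lborel A5"
proof (rule int_dom[where h = "\<lambda>x. (norm x^2) powr (-p) * (sq x + 1) powr (p/2)"])
  show "A5 \<in> borel_measurable borel" by simp
  show "continuous_on S (\<lambda>x. (norm x^2) powr (-p) * (sq x + 1) powr (p/2))"
    by (intro continuous_intros sq_cont ne0 s1_ne)
  fix x show "\<bar>A5 x\<bar> \<le> indicator S x * ((norm x^2) powr (-p) * (sq x + 1) powr (p/2))"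
  proof (cases "sq x = 0")
    case True then show ?thesis by (simp add: A5_def indicator_def)
  next
    case False
    then have sp: "sq x > 0" using sq_nonneg[of x] by simp
    have "sq x powr (p/2) \<le> (sq x + 1) powr (p/2)" using sp p1 by (intro powr_mono2) auto
    then have "(norm x^2) powr (-p) * sq x powr (p/2) \<le> (norm x^2) powr (-p) * (sq x + 1) powr (p/2)"
      by (intro mult_left_mono) auto
    then show ?thesis using False sq_pos_S[OF sp] by (simp add: A5_def)
  qed
qed

lemma A_key: "(p-2) * integral\<^sup>L lborel A2 + integral\<^sup>L lborel A1 + (2*(1-p) + c*p) * integral\<^sup>L lborel A3
   + integral\<^sup>L lborel A4 + c*(NN-2*p) * integral\<^sup>L lborel A5 = 0"
proof -
  have "integral\<^sup>L lborel P0 = (p-2) * integral\<^sup>L lborel A2 + integral\<^sup>L lborel A1"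
    unfolding P0_A using A1_int A2_int by simp
  moreover have "integral\<^sup>L lborel Q0 = (2*(1-p) + c*p) * integral\<^sup>L lborel A3 + integral\<^sup>L lborel A4 + c*(NN-2*p) * integral\<^sup>L lborel A5"
    unfolding Q0_A using A3_int A4_int A5_int by simp
  ultimately show ?thesis using key(3) by simp
qed

end


lemma Cp_expand:
  fixes L U :: complex and k p :: real
  assumes k: "k \<ge> 0"
  shows "Cp p L (L + k *\<^sub>R U) = cmod L powr p - (k * cmod U) powr p
      + p * (k * cmod U) powr (p-2) * k * (Re (U * cnj L) + k * (cmod U)^2)"
proof -
  have d: "L - (L + k *\<^sub>R U) = - (k *\<^sub>R U)" by simp
  have n: "cmod (- (k *\<^sub>R U)) = k * cmod U" using k by simp
  have r: "Re (- (k *\<^sub>R U) * cnj (L + k *\<^sub>R U)) = - k * (Re (U * cnj L) + k * (cmod U)^2)"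
    unfolding cmod_power2 by (simp add: scaleR_conv_of_real algebra_simps power2_eq_square)
  show ?thesis unfolding Cp_def d n r by (simp add: algebra_simps)
qed

lemma normpw: fixes x :: "'a::real_normed_vector" and p :: real
  assumes "norm x > 0" shows "norm x powr (2*(p-1)) = (norm x^2) powr (p-1)"
proof -
  have e: "(2*(p-1))/2 = p - 1" by simp
  show ?thesis using pw_sq[OF assms, of "2*(p-1)"] unfolding e .
qed

lemma adiv: fixes a N s :: real shows "a * (N / s) = (a / s) * N"
  by (simp add: divide_inverse mult_ac)

context cset
begin

lemma nz_facts: assumes "u x \<noteq> 0"
  shows "sq x > 0" "cmod (u x) > 0" "x \<in> S" "norm x > 0" "(cmod (u x))^2 = sq x"
proof -
  show s: "sq x > 0" using assms unfolding sq_eq by simp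
  show "cmod (u x) > 0" using assms by simp
  show xS: "x \<in> S" using sq_pos_S[OF s] .
  show "norm x > 0" using S_nz[OF xS] by simp
  show "(cmod (u x))^2 = sq x" using sq_eq by simp
qed

lemma W_eq: assumes "u x \<noteq> 0"
  shows "cmod (u x) powr (p-2) / norm x powr (2*(p-1)) = (norm x^2) powr (1-p) * sq x powr ((p-2)/2)"
proof -
  note f = nz_facts[OF assms]
  have h1: "cmod (u x) powr (p-2) = sq x powr ((p-2)/2)"
    using pw_sq[OF f(2), of "p-2"] f(5) by simp
  have h2: "norm x powr (2*(p-1)) = (norm x^2) powr (p-1)"
    by (rule normpw[OF f(4)])
  have h3: "(norm x^2) powr (1-p) = 1 / (norm x^2) powr (p-1)"
    using powr_minus_divide[of "norm x^2" "p-1"] by simp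
  show ?thesis unfolding h1 h2 h3 by simp
qed

lemma B_eq: assumes "u x \<noteq> 0"
  shows "cmod (u x) powr p / norm x powr (2*p) = (norm x^2) powr (-p) * sq x powr (p/2)"
proof -
  note f = nz_facts[OF assms]
  have h1: "cmod (u x) powr p = sq x powr (p/2)"
    using pw_sq[OF f(2), of "p"] f(5) by simp
  have h2: "norm x powr (2*p) = (norm x^2) powr p"
    using pw_sq[OF f(4), of "2*p"] by simp
  have h3: "(norm x^2) powr (-p) = 1 / (norm x^2) powr p"
    using powr_minus_divide[of "norm x^2" "p"] by simp
  show ?thesis unfolding h1 h2 h3 by simp
qed

lemma f1_conv: "cmod (u x) powr p / norm x powr (2*p) = A5 x"
proof (cases "u x = 0")
  case True then show ?thesis by (simp add: A5_def sq_def)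
next
  case False
  then have "sq x \<noteq> 0" using nz_facts(1)[OF False] by simp
  then show ?thesis using B_eq[OF False] by (simp add: A5_def)
qed

lemma lap_Re: "Re (u x * cnj (laplacian u x)) = lapRe x"
proof -
  have "Re (u x * cnj (laplacian u x)) = Re (cnj (u x) * laplacian u x)" by simp
  also have "\<dots> = lapRe x" unfolding laplacian_def lapRe_def
    by (simp add: sum_distrib_left)
  finally show ?thesis .
qed

lemma g_conv: "(if u x = 0 then 0 else cmod (u x) powr (p-2) / norm x powr (2*(p-1)) * Re (u x * cnj (laplacian u x))) = A4 x"
proof (cases "u x = 0")
  case True then show ?thesis by (simp add: A4_def sq_def)
next
  case False
  then have "sq x \<noteq> 0" using nz_facts(1)[OF False] by simp
  then show ?thesis unfolding lap_Re using W_eq[OF False] False by (simp add: A4_def)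
qed

lemma f4_conv: "(if u x = 0 then 0 else cmod (u x) powr (p-2) / norm x powr (2*(p-1)) *
     (grad_norm_sq u x - (norm (grad (\<lambda>y. cmod (u y)) x))\<^sup>2)) = A1 x - A2 x"
proof (cases "u x = 0")
  case True then show ?thesis by (simp add: A1_def A2_def sq_def)
next
  case False
  note f = nz_facts[OF False]
  have gn: "grad_norm_sq u x = gn x" unfolding grad_norm_sq_def gn_def ..
  have e: "sq x powr ((p-2)/2) * (nR2 x / sq x) = sq x powr ((p-4)/2) * nR2 x"
  proof -
    have "sq x powr ((p-2)/2) / sq x = sq x powr ((p-2)/2 - 1)" by (rule pw_div[OF f(1)])
    also have "(p-2)/2 - 1 = (p-4)/2" by (simp add: field_simps)
    finally have "sq x powr ((p-2)/2) / sq x = sq x powr ((p-4)/2)" .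
    then show ?thesis unfolding adiv by simp
  qed
  have "(norm x^2) powr (1-p) * sq x powr ((p-2)/2) * (gn x - nR2 x / sq x)
      = (norm x^2) powr (1-p) * sq x powr ((p-2)/2) * gn x - (norm x^2) powr (1-p) * (sq x powr ((p-2)/2) * (nR2 x / sq x))"
    by (simp add: algebra_simps)
  also have "\<dots> = A1 x - A2 x" unfolding e using f(1) by (simp add: A1_def A2_def mult_ac)
  finally show ?thesis using False W_eq[OF False] grad_norm_sq_eq[OF False] gn by simp
qed

lemma f3_conv: "(if u x = 0 then 0 else cmod (u x) powr (p-2) / norm x powr (2*(p-1)) *
     (norm (grad (\<lambda>y. cmod (u y)) x + (aa * cmod (u x) / (norm x)\<^sup>2) *\<^sub>R x))\<^sup>2)
   = A2 x + 2 * aa * A3 x + aa^2 * A5 x"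
proof (cases "u x = 0")
  case True then show ?thesis by (simp add: A2_def A3_def A5_def sq_def)
next
  case False
  note f = nz_facts[OF False]
  define v where "v = cmod (u x)"
  define n2 where "n2 = (norm x)^2"
  define s where "s = sq x"
  have n2p: "n2 > 0" unfolding n2_def using f(4) by simp
  have vp: "v > 0" unfolding v_def using f(2) .
  have sp: "s > 0" unfolding s_def using f(1) .
  have vs: "v^2 = s" unfolding v_def s_def using f(5) .
  have expand: "(norm (grad (\<lambda>y. cmod (u y)) x + (aa * v / n2) *\<^sub>R x))\<^sup>2
      = nR2 x / s + 2 * aa * yR x / n2 + aa^2 * s / n2"
  proof -
    have "(norm (grad (\<lambda>y. cmod (u y)) x + (aa * v / n2) *\<^sub>R x))\<^sup>2
      = nR2 x / s + 2 * (aa * v / n2) * yR x / v + (aa * v / n2)^2 * n2"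
      using grad_shift_sq[OF False, of "aa * v / n2"] unfolding v_def[symmetric] s_def[symmetric] n2_def[symmetric] .
    also have "\<dots> = nR2 x / s + 2 * aa * yR x / n2 + aa^2 * v^2 / n2"
      using vp n2p by (simp add: field_simps power2_eq_square)
    finally show ?thesis unfolding vs .
  qed
  have Wv: "cmod (u x) powr (p-2) / norm x powr (2*(p-1)) = n2 powr (1-p) * s powr ((p-2)/2)"
    using W_eq[OF False] unfolding n2_def s_def .
  have t1: "n2 powr (1-p) * s powr ((p-2)/2) * (nR2 x / s) = n2 powr (1-p) * s powr ((p-4)/2) * nR2 x"
  proof -
    have "s powr ((p-2)/2) / s = s powr ((p-2)/2 - 1)" by (rule pw_div[OF sp])
    also have "(p-2)/2 - 1 = (p-4)/2" by (simp add: field_simps)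
    finally have "s powr ((p-2)/2) / s = s powr ((p-4)/2)" .
    then have h: "s powr ((p-2)/2) / s = s powr ((p-4)/2)" .
    have "n2 powr (1-p) * s powr ((p-2)/2) * (nR2 x / s) = n2 powr (1-p) * (s powr ((p-2)/2) * (nR2 x / s))"
      by (rule mult.assoc)
    also have "\<dots> = n2 powr (1-p) * ((s powr ((p-2)/2) / s) * nR2 x)" by (simp only: adiv)
    also have "\<dots> = n2 powr (1-p) * s powr ((p-4)/2) * nR2 x" unfolding h by (rule mult.assoc[symmetric])
    finally show ?thesis .
  qed
  have nb: "n2 powr (1-p) / n2 = n2 powr (-p)"
    using pw_div[OF n2p, of "1-p"] by simp
  have t2: "n2 powr (1-p) * s powr ((p-2)/2) * (2 * aa * yR x / n2) = 2 * aa * (n2 powr (-p) * s powr ((p-2)/2) * yR x)"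
    using nb[symmetric] by (simp add: field_simps)
  have sps: "s powr ((p-2)/2) * s = s powr (p/2)"
    using pw_mul[OF sp, of "(p-2)/2"] by (simp add: field_simps)
  have t3: "n2 powr (1-p) * s powr ((p-2)/2) * (aa^2 * s / n2) = aa^2 * (n2 powr (-p) * s powr (p/2))"
  proof -
    have "n2 powr (1-p) * s powr ((p-2)/2) * (aa^2 * s / n2) = aa^2 * ((n2 powr (1-p) / n2) * (s powr ((p-2)/2) * s))"
      by (simp add: field_simps)
    then show ?thesis unfolding nb sps .
  qed
  have "cmod (u x) powr (p-2) / norm x powr (2*(p-1)) *
     (norm (grad (\<lambda>y. cmod (u y)) x + (aa * cmod (u x) / (norm x)\<^sup>2) *\<^sub>R x))\<^sup>2
     = n2 powr (1-p) * s powr ((p-2)/2) * (nR2 x / s + 2 * aa * yR x / n2 + aa^2 * s / n2)"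
    unfolding Wv using expand unfolding v_def n2_def by simp
  also have "\<dots> = n2 powr (1-p) * s powr ((p-4)/2) * nR2 x + 2 * aa * (n2 powr (-p) * s powr ((p-2)/2) * yR x)
      + aa^2 * (n2 powr (-p) * s powr (p/2))"
    unfolding distrib_left t1 t2 t3 ..
  also have "\<dots> = A2 x + 2 * aa * A3 x + aa^2 * A5 x"
    using sp unfolding A2_def A3_def A5_def s_def n2_def by simp
  finally show ?thesis using False by simp
qed

lemma f2_conv: assumes C: "C \<ge> 0"
  shows "Cp p (laplacian u x) (laplacian u x + (C / (norm x)\<^sup>2) *\<^sub>R u x)
     = cmod (laplacian u x) powr p - C powr p * A5 x + p * C powr (p-1) * (A4 x + C * A5 x)"
proof -
  have k: "C / (norm x)^2 \<ge> 0" using C by simp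
  note ex = Cp_expand[OF k, of p "laplacian u x" "u x"]
  show ?thesis
  proof (cases "C = 0 \<or> u x = 0")
    case True
    then have z: "C / (norm x)^2 * cmod (u x) = 0" by auto
    have z1: "C powr p * A5 x = 0"
      using True by (auto simp: A4_def A5_def sq_def)
    have z2: "p * C powr (p-1) * (A4 x + C * A5 x) = 0"
      using True by (auto simp: A4_def A5_def sq_def)
    show ?thesis unfolding ex z z1 z2 by simp
  next
    case False
    then have Cp0: "C > 0" and nz: "u x \<noteq> 0" using C by auto
    note f = nz_facts[OF nz]
    define v where "v = cmod (u x)"
    define n2 where "n2 = (norm x)^2"
    define s where "s = sq x"
    have n2p: "n2 > 0" unfolding n2_def using f(4) by simp
    have vp: "v > 0" unfolding v_def using f(2) .
    have sp: "s > 0" unfolding s_def using f(1) .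
    have vs: "v^2 = s" unfolding v_def s_def using f(5) .
    have A5e: "A5 x = v powr p / n2 powr p"
      using B_eq[OF nz] f1_conv[of x] pw_sq[OF f(4), of "2*p"] unfolding v_def n2_def by simp
    have A4e: "A4 x = v powr (p-2) / n2 powr (p-1) * lapRe x"
    proof -
      have "A4 x = cmod (u x) powr (p-2) / norm x powr (2*(p-1)) * lapRe x"
        using g_conv[of x, unfolded lap_Re] nz by simp
      then show ?thesis using normpw[OF f(4), of p] unfolding v_def n2_def by simp
    qed
    have m1: "(C / n2 * v) powr p = C powr p * (v powr p / n2 powr p)"
      by (simp add: powr_mult powr_divide)
    have Cpw: "C powr (p-2) * C = C powr (p-1)"
      using pw_mul[OF Cp0, of "p-2"] by simp
    have npw: "n2 powr (p-2) * n2 = n2 powr (p-1)"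
      using pw_mul[OF n2p, of "p-2"] by simp
    have npw2: "n2 powr (p-1) * n2 = n2 powr p"
      using pw_mul[OF n2p, of "p-1"] by simp
    have vpw: "v powr (p-2) * v^2 = v powr p"
    proof -
      have "v powr (p-2) * v^2 = (v powr (p-2) * v) * v" by (simp add: power2_eq_square mult.assoc)
      also have "\<dots> = v powr p" using pw_mul[OF vp, of "p-2"] pw_mul[OF vp, of "p-1"] by simp
      finally show ?thesis .
    qed
    have m2: "(C / n2 * v) powr (p-2) * (C / n2) = C powr (p-1) * (v powr (p-2) / n2 powr (p-1))"
    proof -
      have "(C / n2 * v) powr (p-2) * (C / n2) = (C powr (p-2) * C) * v powr (p-2) / (n2 powr (p-2) * n2)"
        by (simp add: powr_mult powr_divide field_simps)
      then show ?thesis unfolding Cpw npw by simp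
    qed
    have m3: "v powr (p-2) / n2 powr (p-1) * (C / n2 * v^2) = C * (v powr p / n2 powr p)"
    proof -
      have "v powr (p-2) / n2 powr (p-1) * (C / n2 * v^2) = C * ((v powr (p-2) * v^2) / (n2 powr (p-1) * n2))"
        by (simp add: field_simps)
      then show ?thesis unfolding vpw npw2 .
    qed
    have "Cp p (laplacian u x) (laplacian u x + (C / (norm x)\<^sup>2) *\<^sub>R u x)
       = cmod (laplacian u x) powr p - (C / n2 * v) powr p
         + p * ((C / n2 * v) powr (p-2) * (C / n2)) * (lapRe x + C / n2 * v^2)"
      unfolding ex unfolding lap_Re v_def[symmetric] n2_def[symmetric] by (simp add: mult_ac)
    also have "\<dots> = cmod (laplacian u x) powr p - C powr p * (v powr p / n2 powr p)
       + p * C powr (p-1) * (v powr (p-2) / n2 powr (p-1) * lapRe x + v powr (p-2) / n2 powr (p-1) * (C / n2 * v^2))"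
      unfolding m1 m2 by (simp only: distrib_left mult.assoc)
    also have "\<dots> = cmod (laplacian u x) powr p - C powr p * A5 x + p * C powr (p-1) * (A4 x + C * A5 x)"
      unfolding m3 A5e A4e ..
    finally show ?thesis .
  qed
qed

lemma lap_out: "y \<notin> S \<Longrightarrow> laplacian u y = 0"
  unfolding laplacian_def by (simp add: udd_out)

lemma f0_int: "integrable lborel (\<lambda>x. cmod (laplacian u x) powr p)"
proof (rule int_supp[OF S_compact])
  have lc: "continuous_on S (laplacian u)"
    unfolding laplacian_def by (intro continuous_on_sum uddc)
  show "continuous_on S (\<lambda>x. cmod (laplacian u x) powr p)"
    using p1 by (intro continuous_on_powr' continuous_intros lc) auto
  fix y assume "y \<notin> S" then show "cmod (laplacian u y) powr p = 0" by (simp add: lap_out)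
qed

end


theorem corollary4p3:
  fixes u :: "'a::euclidean_space \<Rightarrow> complex" and p :: real
  defines "N \<equiv> real DIM('a)"
  defines "C \<equiv> N * (p - 1) * (N - 2 * p) / p\<^sup>2"
  assumes "1 < p" and "p \<le> N / 2"
    and "C0inf_punctured u"
  defines "f0 \<equiv> (\<lambda>x. cmod (laplacian u x) powr p)"
    and "f1 \<equiv> (\<lambda>x. cmod (u x) powr p / norm x powr (2 * p))"
    and "f2 \<equiv> (\<lambda>x. Cp p (laplacian u x) (laplacian u x + (C / (norm x)\<^sup>2) *\<^sub>R u x))"
    and "f3 \<equiv> (\<lambda>x. if u x = 0 then 0 else
               cmod (u x) powr (p - 2) / norm x powr (2 * (p - 1)) *
               (norm (grad (\<lambda>y. cmod (u y)) x
                      + ((N - 2 * p) / p * cmod (u x) / (norm x)\<^sup>2) *\<^sub>R x))\<^sup>2)"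
    and "f4 \<equiv> (\<lambda>x. if u x = 0 then 0 else
               cmod (u x) powr (p - 2) / norm x powr (2 * (p - 1)) *
               (grad_norm_sq u x - (norm (grad (\<lambda>y. cmod (u y)) x))\<^sup>2))"
  shows "integrable lborel f0 \<and> integrable lborel f1 \<and> integrable lborel f2
       \<and> integrable lborel f3 \<and> integrable lborel f4
       \<and> (LINT x|lborel. f0 x) =
           C powr p * (LINT x|lborel. f1 x) + (LINT x|lborel. f2 x)
           + p * (p - 1) * C powr (p - 1) * (LINT x|lborel. f3 x)
           + p * C powr (p - 1) * (LINT x|lborel. f4 x)"
proof -
  have p1: "1 < p" by (rule assms(3))
  have pN: "p \<le> N / 2" by (rule assms(4))
  have cinf: "C0inf_punctured u" by (rule assms(5))
  have sm: "smooth_fun u" and cpt: "compact (closure {x. u x \<noteq> 0})" and z0: "0 \<notin> closure {x. u x \<noteq> 0}"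
    using cinf unfolding C0inf_punctured_def by auto
  define a where "a = (N - 2*p)/p"
  define cc where "cc = 2*(p-1)*(1+a)/p"
  interpret cset u p cc using sm p1 cpt z0 by unfold_locales
  have NN: "NN = N" unfolding NN_def assms(1) ..
  have Cnn: "C \<ge> 0" unfolding assms(2) using p1 pN by (intro divide_nonneg_pos mult_nonneg_nonneg) auto
  have f0e: "f0 = (\<lambda>x. cmod (laplacian u x) powr p)" using assms(6) by simp
  have f1e: "f1 = A5" using assms(7) f1_conv by (simp add: fun_eq_iff)
  have f2e: "f2 = (\<lambda>x. f0 x - C powr p * A5 x + p * C powr (p-1) * (A4 x + C * A5 x))"
    using assms(8) f2_conv[OF Cnn] f0e by (simp add: fun_eq_iff)
  have f3e: "f3 = (\<lambda>x. A2 x + 2 * a * A3 x + a^2 * A5 x)"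
    unfolding assms(9) a_def by (rule ext) (rule f3_conv)
  have f4e: "f4 = (\<lambda>x. A1 x - A2 x)"
    unfolding assms(10) by (rule ext) (rule f4_conv)
  have i0: "integrable lborel f0" unfolding f0e by (rule f0_int)
  have i1: "integrable lborel f1" unfolding f1e by (rule A5_int)
  have i2: "integrable lborel f2" unfolding f2e
    using i0 A4_int A5_int by simp
  have i3: "integrable lborel f3" unfolding f3e
    using A2_int A3_int A5_int by simp
  have i4: "integrable lborel f4" unfolding f4e
    using A1_int A2_int by simp
  define X1 where "X1 = integral\<^sup>L lborel A1"
  define X2 where "X2 = integral\<^sup>L lborel A2"
  define X3 where "X3 = integral\<^sup>L lborel A3"
  define X4 where "X4 = integral\<^sup>L lborel A4"
  define X5 where "X5 = integral\<^sup>L lborel A5"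
  define I0 where "I0 = integral\<^sup>L lborel f0"
  have I1: "integral\<^sup>L lborel f1 = X5" unfolding f1e X5_def ..
  have I2: "integral\<^sup>L lborel f2 = I0 - C powr p * X5 + p * C powr (p-1) * (X4 + C * X5)"
    unfolding f2e I0_def X4_def X5_def using i0 A4_int A5_int by simp
  have I3: "integral\<^sup>L lborel f3 = X2 + 2 * a * X3 + a^2 * X5"
    unfolding f3e X2_def X3_def X5_def using A2_int A3_int A5_int by simp
  have I4: "integral\<^sup>L lborel f4 = X1 - X2"
    unfolding f4e X1_def X2_def using A1_int A2_int by simp
  have pnz: "p \<noteq> 0" using p1 by simp
  have e1: "2*(1-p) + cc*p = 2*a*(p-1)"
    unfolding cc_def using pnz by (simp add: field_simps)
  have e2: "cc*(NN-2*p) = C + (p-1)*a^2"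
    unfolding cc_def a_def NN assms(2) using pnz by (simp add: field_simps power2_eq_square)
  have AK: "(p-2) * X2 + X1 + 2*a*(p-1) * X3 + X4 + (C + (p-1)*a^2) * X5 = 0"
    using A_key unfolding e1 e2 X1_def X2_def X3_def X4_def X5_def .
  have br: "X4 + C * X5 + (p-1) * (X2 + 2 * a * X3 + a^2 * X5) + (X1 - X2) = 0"
  proof -
    have "X4 + C * X5 + (p-1) * (X2 + 2 * a * X3 + a^2 * X5) + (X1 - X2)
       = (p-2) * X2 + X1 + 2*a*(p-1) * X3 + X4 + (C + (p-1)*a^2) * X5"
      by (simp add: algebra_simps)
    then show ?thesis using AK by simp
  qed
  have main: "I0 = C powr p * X5 + (I0 - C powr p * X5 + p * C powr (p-1) * (X4 + C * X5))
      + p * (p - 1) * C powr (p - 1) * (X2 + 2 * a * X3 + a^2 * X5) + p * C powr (p - 1) * (X1 - X2)"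
  proof -
    have "C powr p * X5 + (I0 - C powr p * X5 + p * C powr (p-1) * (X4 + C * X5))
      + p * (p - 1) * C powr (p - 1) * (X2 + 2 * a * X3 + a^2 * X5) + p * C powr (p - 1) * (X1 - X2)
      = I0 + p * C powr (p-1) * (X4 + C * X5 + (p-1) * (X2 + 2 * a * X3 + a^2 * X5) + (X1 - X2))"
      by (simp add: algebra_simps)
    then show ?thesis unfolding br by simp
  qed
  show ?thesis
    using i0 i1 i2 i3 i4 main unfolding I1 I2 I3 I4 I0_def by simp
qed


end
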